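(* Let $\mu,\lambda>0$ and $L_2>0$. For $F\in\mathbb{R}^{3\times3}$ let $E=(F^TF-I)/2$ and $p(F)=\mu\|E\|_F^2+\frac\lambda2\mathrm{tr}^2(E)$. Define $$\bar p^{\mathrm{StVK}}(x,y)=\begin{cases}y\sqrt{6(2y/3-x)^2+y^2/3}& x>y\\ y\sqrt{6(2y/3+x)^2+y^2/3}& x<-y\\ x^2&\text{otherwise}\end{cases}$$ and $\bar p(F)=\mu\,\bar p^{\mathrm{StVK}}\big(\|E\|_F,\sqrt{L_2/\mu}\big)+\frac\lambda2\bar p^{\mathrm{StVK}}\big(\mathrm{tr}(E),\sqrt{2L_2/\lambda}\big)$. Then: (i) $\bar p$ is $q(L_2)$-curvature bounded for some polynomial $q$; (ii) $\bar p$ is twice differentiable; (iii) its second derivatives are locally Lipschitz; (iv) $p\ge0$ and $\bar p(F)=p(F)$ whenever $\bar p(F)\le L_2$.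
   Context: $\|\cdot\|_F$ is the Frobenius norm; $F$ is identified with a vector in $\mathbb{R}^9$. A function $\phi$ is $L$-curvature bounded if $\phi(x)+\frac L2\|x\|^2$ is convex and $\nabla\phi$ is $L$-Lipschitz. *)

theory Defs
  imports "HOL-Analysis.Analysis" "HOL-Computational_Algebra.Polynomial"
begin

type_synonym mat3 = "real^3^3"

text \<open>Green--Lagrange strain E = (F^T F - I)/2. The norm on real^3^3 is the
  Frobenius norm (F identified with a vector in R^9).\<close>
definition strainE :: "mat3 \<Rightarrow> mat3" where
  "strainE F = (1/2) *\<^sub>R (transpose F ** F - mat 1)"

definition stvk_energy :: "real \<Rightarrow> real \<Rightarrow> mat3 \<Rightarrow> real" where
  "stvk_energy mu lam F = mu * (norm (strainE F))^2 + lam/2 * (trace (strainE F))^2"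

definition pStVK :: "real \<Rightarrow> real \<Rightarrow> real" where
  "pStVK x y = (if x > y then y * sqrt (6 * (2*y/3 - x)^2 + y^2/3)
               else if x < - y then y * sqrt (6 * (2*y/3 + x)^2 + y^2/3)
               else x^2)"

definition pbar :: "real \<Rightarrow> real \<Rightarrow> real \<Rightarrow> mat3 \<Rightarrow> real" where
  "pbar mu lam L2 F = mu * pStVK (norm (strainE F)) (sqrt (L2/mu))
                    + lam/2 * pStVK (trace (strainE F)) (sqrt (2*L2/lam))"

definition has_gradient_everywhere :: "('a::real_inner \<Rightarrow> real) \<Rightarrow> ('a \<Rightarrow> 'a) \<Rightarrow> bool" where
  "has_gradient_everywhere f g \<longleftrightarrow> (\<forall>x. (f has_derivative (\<lambda>h. g x \<bullet> h)) (at x))"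

definition curvature_bounded :: "real \<Rightarrow> ('a::real_inner \<Rightarrow> real) \<Rightarrow> bool" where
  "curvature_bounded L f \<longleftrightarrow>
     convex_on UNIV (\<lambda>x. f x + L/2 * (norm x)^2) \<and>
     (\<exists>g. has_gradient_everywhere f g \<and> L-lipschitz_on UNIV g)"

definition twice_diff_loclip_hessian :: "('a::real_inner \<Rightarrow> real) \<Rightarrow> bool" where
  "twice_diff_loclip_hessian f \<longleftrightarrow>
     (\<exists>g (H :: 'a \<Rightarrow> 'a \<Rightarrow>\<^sub>L 'a).
        has_gradient_everywhere f g \<and>
        (\<forall>x. (g has_derivative blinfun_apply (H x)) (at x)) \<and>
        (\<forall>x. \<exists>U C. open U \<and> x \<in> U \<and> C-lipschitz_on U H))"

definition twice_differentiable :: "('a::real_inner \<Rightarrow> real) \<Rightarrow> bool" where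
  "twice_differentiable f \<longleftrightarrow>
     (\<exists>g (H :: 'a \<Rightarrow> 'a \<Rightarrow>\<^sub>L 'a).
        has_gradient_everywhere f g \<and>
        (\<forall>x. (g has_derivative blinfun_apply (H x)) (at x)))"

end

theory Submission
  imports Defs
begin

lemma deriv_glue:
  fixes g h g' h' :: "real \<Rightarrow> real"
  assumes g: "\<And>x. x \<le> a \<Longrightarrow> (g has_real_derivative g' x) (at x)"
    and h: "\<And>x. x \<ge> a \<Longrightarrow> (h has_real_derivative h' x) (at x)"
    and e0: "g a = h a" and e1: "g' a = h' a"
  shows "((\<lambda>x. if x \<le> a then g x else h x) has_real_derivative (if x \<le> a then g' x else h' x)) (at x)"
proof -
  have cS: "closure {..a} = {..a}" by simp
  have cT: "closure {a<..} = {a..}" by simp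
  have *: "((\<lambda>x. if x \<in> {..a} then g x else h x) has_vector_derivative (if x \<in> {..a} then g' x else h' x)) (at x within UNIV)"
  proof (rule has_vector_derivative_If_within_closures[where T="{a<..}"])
    show "x \<in> {..a} \<union> {a<..}" by auto
    show "UNIV = {..a} \<union> {a<..}" by auto
    show "(g has_vector_derivative g' x) (at x within {..a} \<union> (closure {..a} \<inter> closure {a<..}))"
      if "x \<in> {..a} \<union> (closure {..a} \<inter> closure {a<..})"
      using that g[of x] unfolding cS cT
      by (auto simp: has_real_derivative_iff_has_vector_derivative[symmetric] intro: has_field_derivative_at_within)
    show "(h has_vector_derivative h' x) (at x within {a<..} \<union> (closure {..a} \<inter> closure {a<..}))"
      if "x \<in> {a<..} \<union> (closure {..a} \<inter> closure {a<..})"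
      using that h[of x] unfolding cS cT
      by (auto simp: has_real_derivative_iff_has_vector_derivative[symmetric] intro: has_field_derivative_at_within)
    show "g x = h x" if "x \<in> closure {..a}" "x \<in> closure {a<..}" using that e0 unfolding cS cT by auto
    show "g' x = h' x" if "x \<in> closure {..a}" "x \<in> closure {a<..}" using that e1 unfolding cS cT by auto
  qed
  then show ?thesis
    by (simp add: has_real_derivative_iff_has_vector_derivative[symmetric])
qed

definition hS :: "real \<Rightarrow> real \<Rightarrow> real" where "hS y u = 6 * u - 8 * y * sqrt u + 3 * y^2"
definition G0 :: "real \<Rightarrow> real \<Rightarrow> real" where "G0 y u = y * sqrt (hS y u)"
definition G1 :: "real \<Rightarrow> real \<Rightarrow> real" where "G1 y u = y * (6 - 4 * y/sqrt u) / (2 * sqrt (hS y u))"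
definition G2 :: "real \<Rightarrow> real \<Rightarrow> real" where
  "G2 y u = y * (2 * hS y u * (2 * y/(u * sqrt u)) - (6 - 4 * y/sqrt u)^2) / (4 * hS y u * sqrt (hS y u))"

lemma hS_ge:
  assumes "y > 0" "u \<ge> y^2" shows "hS y u \<ge> u"
proof -
  define r where "r = sqrt u"
  have r: "r \<ge> y" using assms unfolding r_def using real_le_rsqrt by force
  have u: "u = r^2" using assms r_def by (smt (verit) real_sqrt_pow2 zero_le_power2)
  have "hS y u - u = (5 * r - 3 * y) * (r-y)" unfolding hS_def u using r assms by (simp add: power2_eq_square algebra_simps)
  also have "\<dots> \<ge> 0" using r assms by (intro mult_nonneg_nonneg) auto
  finally show ?thesis by simp
qed

lemma hS_deriv:
  assumes "u > 0" shows "(hS y has_real_derivative (6 - 4 * y/sqrt u)) (at u)"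
proof -
  have "((\<lambda>u. 6 * u - 8 * y * sqrt u + 3 * y^2) has_real_derivative (6 *1 - 8 * y * (inverse (sqrt u)/2) + 0)) (at u)"
    by (intro DERIV_add DERIV_diff DERIV_cmult DERIV_ident DERIV_const DERIV_real_sqrt) (use assms in simp)
  then show ?thesis unfolding hS_def[abs_def] by (simp add: field_simps)
qed

lemma G0_deriv:
  assumes "y > 0" "u \<ge> y^2" shows "(G0 y has_real_derivative G1 y u) (at u)"
proof -
  have s0: "u > 0" using assms by (smt (verit) zero_less_power2)
  have h0: "hS y u > 0" using hS_ge[OF assms] s0 by simp
  have "((\<lambda>u. y * sqrt (hS y u)) has_real_derivative y * ((inverse (sqrt (hS y u))/2) * (6 - 4 * y/sqrt u))) (at u)"
    by (intro DERIV_cmult DERIV_chain2[where f=sqrt] DERIV_real_sqrt hS_deriv s0 h0)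
  then show ?thesis unfolding G0_def[abs_def] G1_def by (simp add: field_simps)
qed

lemma G1_deriv:
  assumes "y > 0" "u \<ge> y^2" shows "(G1 y has_real_derivative G2 y u) (at u)"
proof -
  have s0: "u > 0" using assms by (smt (verit) zero_less_power2)
  have h0: "hS y u > 0" using hS_ge[OF assms] s0 by simp
  have q0: "sqrt u > 0" "sqrt (hS y u) > 0" using s0 h0 by auto
  have ds: "(sqrt has_real_derivative inverse (sqrt u) / 2) (at u)" by (rule DERIV_real_sqrt) (use s0 in simp)
  have dh: "((\<lambda>u. sqrt (hS y u)) has_real_derivative (inverse (sqrt (hS y u)) / 2) * (6 - 4 * y / sqrt u)) (at u)"
    by (intro DERIV_chain2[where f=sqrt] DERIV_real_sqrt hS_deriv s0 h0)
  have d1: "((\<lambda>u. 4 * y / sqrt u) has_real_derivative ((0 * sqrt u - 4 * y * (inverse (sqrt u) / 2)) / (sqrt u * sqrt u))) (at u)"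
    by (intro DERIV_divide DERIV_const ds) (use q0 in simp)
  have d2: "((\<lambda>u. y * (6 - 4 * y / sqrt u)) has_real_derivative y * (0 - ((0 * sqrt u - 4 * y * (inverse (sqrt u) / 2)) / (sqrt u * sqrt u)))) (at u)"
    by (intro DERIV_cmult DERIV_diff DERIV_const d1)
  have d3: "((\<lambda>u. 2 * sqrt (hS y u)) has_real_derivative 2 * ((inverse (sqrt (hS y u)) / 2) * (6 - 4 * y / sqrt u))) (at u)"
    by (intro DERIV_cmult dh)
  have d4: "((\<lambda>u. y * (6 - 4 * y / sqrt u) / (2 * sqrt (hS y u))) has_real_derivative
     ((y * (0 - ((0 * sqrt u - 4 * y * (inverse (sqrt u) / 2)) / (sqrt u * sqrt u)))) * (2 * sqrt (hS y u)) - (y * (6 - 4 * y / sqrt u)) * (2 * ((inverse (sqrt (hS y u)) / 2) * (6 - 4 * y / sqrt u))))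
      / ((2 * sqrt (hS y u)) * (2 * sqrt (hS y u)))) (at u)"
    by (intro DERIV_divide d2 d3) (use q0 in simp)
  have e: "((y * (0 - ((0 * sqrt u - 4 * y * (inverse (sqrt u) / 2)) / (sqrt u * sqrt u)))) * (2 * sqrt (hS y u)) - (y * (6 - 4 * y / sqrt u)) * (2 * ((inverse (sqrt (hS y u)) / 2) * (6 - 4 * y / sqrt u))))
      / ((2 * sqrt (hS y u)) * (2 * sqrt (hS y u))) = G2 y u"
  proof -
    define a where "a = sqrt u"
    define b where "b = sqrt (hS y u)"
    have a0: "a > 0" and b0: "b > 0" using q0 by (auto simp: a_def b_def)
    have hb: "hS y u = b^2" using h0 by (simp add: b_def)
    have ua: "u = a^2" using s0 by (simp add: a_def)
    show ?thesis unfolding G2_def a_def[symmetric] b_def[symmetric] hb unfolding ua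
      using a0 b0 by (simp add: field_simps power2_eq_square power3_eq_cube)
  qed
  show ?thesis using d4 unfolding e G1_def[abs_def] .
qed

lemma hS_at: "y > 0 \<Longrightarrow> hS y (y^2) = y^2"
  by (simp add: hS_def power2_eq_square)

lemma G_at: assumes "y > 0" shows "G0 y (y^2) = y^2" "G1 y (y^2) = 1" "G2 y (y^2) = 0"
proof -
  have h: "hS y (y^2) = y^2" by (rule hS_at[OF assms])
  have s: "sqrt (y^2) = y" using assms by simp
  show "G0 y (y^2) = y^2" "G1 y (y^2) = 1" "G2 y (y^2) = 0"
    unfolding G0_def G1_def G2_def h s using assms by (simp_all add: field_simps power2_eq_square power3_eq_cube)
qed

definition phi1 :: "real \<Rightarrow> real \<Rightarrow> real" where "phi1 y u = (if u \<le> y^2 then u else G0 y u)"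
definition phi1d :: "real \<Rightarrow> real \<Rightarrow> real" where "phi1d y u = (if u \<le> y^2 then 1 else G1 y u)"
definition phi1dd :: "real \<Rightarrow> real \<Rightarrow> real" where "phi1dd y u = (if u \<le> y^2 then 0 else G2 y u)"

lemma phi1_deriv: assumes "y > 0" shows "(phi1 y has_real_derivative phi1d y u) (at u)"
  unfolding phi1_def[abs_def] phi1d_def
  by (rule deriv_glue) (use assms G_at G0_deriv in auto)

lemma phi1d_deriv: assumes "y > 0" shows "(phi1d y has_real_derivative phi1dd y u) (at u)"
  unfolding phi1d_def[abs_def] phi1dd_def
  by (rule deriv_glue) (use assms G_at G1_deriv in auto)

definition gp :: "real \<Rightarrow> real \<Rightarrow> real" where "gp z t = 6 * (2 * z / 3 - t)^2 + z^2 / 3"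
definition gm :: "real \<Rightarrow> real \<Rightarrow> real" where "gm z t = 6 * (2 * z / 3 + t)^2 + z^2 / 3"
definition P0 where "P0 z t = z * sqrt (gp z t)"
definition P1 where "P1 z t = 6 * z * (t - 2 * z / 3) / sqrt (gp z t)"
definition P2 where "P2 z t = 2 * z^3 / (gp z t * sqrt (gp z t))"
definition M0 where "M0 z t = z * sqrt (gm z t)"
definition M1 where "M1 z t = 6 * z * (t + 2 * z / 3) / sqrt (gm z t)"
definition M2 where "M2 z t = 2 * z^3 / (gm z t * sqrt (gm z t))"

lemma gp_pos: "z > 0 \<Longrightarrow> gp z t > 0" unfolding gp_def by (simp add: add_nonneg_pos)
lemma gm_pos: "z > 0 \<Longrightarrow> gm z t > 0" unfolding gm_def by (simp add: add_nonneg_pos)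

lemma P0_deriv: assumes "z > 0" shows "(P0 z has_real_derivative P1 z t) (at t)"
proof -
  have g0: "gp z t > 0" by (rule gp_pos[OF assms])
  have dg: "(gp z has_real_derivative 12 * (t - 2 * z / 3)) (at t)"
    unfolding gp_def[abs_def] by (auto intro!: derivative_eq_intros simp: algebra_simps)
  have "((\<lambda>t. z * sqrt (gp z t)) has_real_derivative z * ((inverse (sqrt (gp z t)) / 2) * (12 * (t - 2 * z / 3)))) (at t)"
    by (intro DERIV_cmult DERIV_chain2[where f=sqrt] DERIV_real_sqrt dg g0)
  then show ?thesis unfolding P0_def[abs_def] P1_def by (rule DERIV_cong) (use g0 in \<open>simp add: field_simps\<close>)
qed

lemma M0_deriv: assumes "z > 0" shows "(M0 z has_real_derivative M1 z t) (at t)"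
proof -
  have g0: "gm z t > 0" by (rule gm_pos[OF assms])
  have dg: "(gm z has_real_derivative 12 * (t + 2 * z / 3)) (at t)"
    unfolding gm_def[abs_def] by (auto intro!: derivative_eq_intros simp: algebra_simps)
  have "((\<lambda>t. z * sqrt (gm z t)) has_real_derivative z * ((inverse (sqrt (gm z t)) / 2) * (12 * (t + 2 * z / 3)))) (at t)"
    by (intro DERIV_cmult DERIV_chain2[where f=sqrt] DERIV_real_sqrt dg g0)
  then show ?thesis unfolding M0_def[abs_def] M1_def by (rule DERIV_cong) (use g0 in \<open>simp add: field_simps\<close>)
qed

lemma P1_deriv: assumes "z > 0" shows "(P1 z has_real_derivative P2 z t) (at t)"
proof -
  have g0: "gp z t > 0" by (rule gp_pos[OF assms])
  have dg: "(gp z has_real_derivative 12 * (t - 2 * z / 3)) (at t)"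
    unfolding gp_def[abs_def] by (auto intro!: derivative_eq_intros simp: algebra_simps)
  have dq: "((\<lambda>t. sqrt (gp z t)) has_real_derivative (inverse (sqrt (gp z t)) / 2) * (12 * (t - 2 * z / 3))) (at t)"
    by (intro DERIV_chain2[where f=sqrt] DERIV_real_sqrt dg g0)
  have dn: "((\<lambda>t. 6 * z * (t - 2 * z / 3)) has_real_derivative 6 * z * (1 - 0)) (at t)"
    by (intro DERIV_cmult DERIV_diff DERIV_ident DERIV_const)
  have "((\<lambda>t. 6 * z * (t - 2 * z / 3) / sqrt (gp z t)) has_real_derivative
    ((6 * z * (1 - 0)) * sqrt (gp z t) - (6 * z * (t - 2 * z / 3)) * ((inverse (sqrt (gp z t)) / 2) * (12 * (t - 2 * z / 3)))) / (sqrt (gp z t) * sqrt (gp z t))) (at t)"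
    by (intro DERIV_divide dn dq) (use g0 in simp)
  then show ?thesis unfolding P1_def[abs_def]
  proof (rule DERIV_cong)
    define a where "a = sqrt (gp z t)"
    have a0: "a > 0" using g0 by (simp add: a_def)
    have ga: "gp z t = a^2" using g0 by (simp add: a_def)
    have gw: "a^2 = 6 * (t - 2 * z / 3)^2 + z^2 / 3" using ga unfolding gp_def by (simp add: power2_eq_square algebra_simps)
    show "((6 * z * (1 - 0)) * sqrt (gp z t) - (6 * z * (t - 2 * z / 3)) * ((inverse (sqrt (gp z t)) / 2) * (12 * (t - 2 * z / 3)))) / (sqrt (gp z t) * sqrt (gp z t)) = P2 z t"
      unfolding P2_def a_def[symmetric] ga using a0
      apply (simp add: field_simps)
      apply (simp add: power2_eq_square power3_eq_cube algebra_simps)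
      using gw unfolding power2_eq_square by algebra
  qed
qed

lemma M1_deriv: assumes "z > 0" shows "(M1 z has_real_derivative M2 z t) (at t)"
proof -
  have g0: "gm z t > 0" by (rule gm_pos[OF assms])
  have dg: "(gm z has_real_derivative 12 * (t + 2 * z / 3)) (at t)"
    unfolding gm_def[abs_def] by (auto intro!: derivative_eq_intros simp: algebra_simps)
  have dq: "((\<lambda>t. sqrt (gm z t)) has_real_derivative (inverse (sqrt (gm z t)) / 2) * (12 * (t + 2 * z / 3))) (at t)"
    by (intro DERIV_chain2[where f=sqrt] DERIV_real_sqrt dg g0)
  have dn: "((\<lambda>t. 6 * z * (t + 2 * z / 3)) has_real_derivative 6 * z * (1 + 0)) (at t)"
    by (intro DERIV_cmult DERIV_add DERIV_ident DERIV_const)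
  have "((\<lambda>t. 6 * z * (t + 2 * z / 3) / sqrt (gm z t)) has_real_derivative
    ((6 * z * (1 + 0)) * sqrt (gm z t) - (6 * z * (t + 2 * z / 3)) * ((inverse (sqrt (gm z t)) / 2) * (12 * (t + 2 * z / 3)))) / (sqrt (gm z t) * sqrt (gm z t))) (at t)"
    by (intro DERIV_divide dn dq) (use g0 in simp)
  then show ?thesis unfolding M1_def[abs_def]
  proof (rule DERIV_cong)
    define a where "a = sqrt (gm z t)"
    have a0: "a > 0" using g0 by (simp add: a_def)
    have ga: "gm z t = a^2" using g0 by (simp add: a_def)
    have gw: "a^2 = 6 * (t + 2 * z / 3)^2 + z^2 / 3" using ga unfolding gm_def by (simp add: power2_eq_square algebra_simps)
    show "((6 * z * (1 + 0)) * sqrt (gm z t) - (6 * z * (t + 2 * z / 3)) * ((inverse (sqrt (gm z t)) / 2) * (12 * (t + 2 * z / 3)))) / (sqrt (gm z t) * sqrt (gm z t)) = M2 z t"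
      unfolding M2_def a_def[symmetric] ga using a0
      apply (simp add: field_simps)
      apply (simp add: power2_eq_square power3_eq_cube algebra_simps)
      using gw unfolding power2_eq_square by algebra
  qed
qed

lemma PM_at: assumes "z > 0"
  shows "P0 z z = z^2" "P1 z z = 2 * z" "P2 z z = 2" "M0 z (-z) = z^2" "M1 z (-z) = -2 * z" "M2 z (-z) = 2"
proof -
  have a: "gp z z = z^2" "gm z (-z) = z^2" by (simp_all add: gp_def gm_def power2_eq_square field_simps)
  have s: "sqrt (z^2) = z" using assms by simp
  show "P0 z z = z^2" "P1 z z = 2 * z" "P2 z z = 2" "M0 z (-z) = z^2" "M1 z (-z) = -2 * z" "M2 z (-z) = 2"
    unfolding P0_def P1_def P2_def M0_def M1_def M2_def a s using assms
    by (simp_all add: field_simps power2_eq_square power3_eq_cube)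
qed

definition phi2 where "phi2 z t = (if t \<le> z then (if t \<le> -z then M0 z t else t^2) else P0 z t)"
definition phi2d where "phi2d z t = (if t \<le> z then (if t \<le> -z then M1 z t else 2 * t) else P1 z t)"
definition phi2dd where "phi2dd z t = (if t \<le> z then (if t \<le> -z then M2 z t else 2) else P2 z t)"

lemma phi2_deriv: assumes "z > 0" shows "(phi2 z has_real_derivative phi2d z t) (at t)"
proof -
  have inner: "((\<lambda>t. if t \<le> -z then M0 z t else t^2) has_real_derivative (if t \<le> -z then M1 z t else 2 * t)) (at t)" for t
    by (rule deriv_glue) (use assms PM_at M0_deriv in \<open>auto intro!: derivative_eq_intros\<close>)
  show ?thesis unfolding phi2_def[abs_def] phi2d_def
    by (rule deriv_glue) (use assms PM_at P0_deriv inner in auto)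
qed

lemma phi2d_deriv: assumes "z > 0" shows "(phi2d z has_real_derivative phi2dd z t) (at t)"
proof -
  have inner: "((\<lambda>t. if t \<le> -z then M1 z t else 2 * t) has_real_derivative (if t \<le> -z then M2 z t else 2)) (at t)" for t
    by (rule deriv_glue) (use assms PM_at M1_deriv in \<open>auto intro!: derivative_eq_intros\<close>)
  show ?thesis unfolding phi2d_def[abs_def] phi2dd_def
    by (rule deriv_glue) (use assms PM_at P1_deriv inner in auto)
qed

lemma G12_bounds:
  assumes y: "y > 0" and u: "u > y^2"
  shows "0 \<le> G1 y u" "G1 y u \<le> 3 * y / sqrt u" "\<bar>G2 y u\<bar> \<le> 9 * y / (sqrt u)^3"
proof -
  define r where "r = sqrt u"
  have r: "r > y" using u y unfolding r_def by (metis abs_of_pos real_less_rsqrt)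
  have r0: "r > 0" using r y by simp
  have ur: "u = r^2" using u y r_def by (smt (verit) real_sqrt_pow2 zero_le_power2)
  define h where "h = hS y u"
  have hr: "h = 6 * r^2 - 8 * y * r + 3 * y^2" unfolding h_def hS_def r_def[symmetric] ur using r0 by simp
  have hge: "h \<ge> r^2" unfolding h_def using hS_ge[of y u] u y ur by simp
  define a where "a = sqrt h"
  have a0: "a \<ge> r" unfolding a_def using hge r0 by (metis abs_of_pos real_le_rsqrt)
  have ah: "h = a^2" unfolding a_def using hge r0 by (smt (verit) real_sqrt_pow2 zero_le_power2)
  have apos: "a > 0" using a0 r0 by simp
  have q1: "0 \<le> 6 - 4 * y / r" using r r0 y by (simp add: field_simps)
  have q2: "6 - 4 * y / r \<le> 6" using r0 y by simp
  have G1e: "G1 y u = y * (6 - 4 * y / r) / (2 * a)" unfolding G1_def r_def a_def h_def ..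
  show "0 \<le> G1 y u" unfolding G1e using q1 y apos by simp
  have "y * (6 - 4 * y / r) / (2 * a) \<le> y * 6 / (2 * r)"
    by (intro frac_le mult_left_mono q2) (use y q1 apos r0 a0 in auto)
  then show "G1 y u \<le> 3 * y / sqrt u" unfolding G1e r_def[symmetric] by simp
  have G2e: "G2 y u = -3 * y * (r - y) * (3 * r^2 - 3 * y * r + y^2) / (r^3 * (h * a))"
  proof -
    have num: "2 * h * (2 * y / (r^2 * r)) - (6 - 4 * y / r)^2 = -12 * (r - y) * (3 * r^2 - 3 * y * r + y^2) / r^3"
      unfolding hr using r0 by (simp add: field_simps power2_eq_square power3_eq_cube)
    have hp: "h > 0" using hge r0 by (smt (verit) zero_less_power2)
    have "G2 y u = y * (2 * h * (2 * y / (r^2 * r)) - (6 - 4 * y / r)^2) / (4 * h * a)"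
      unfolding G2_def unfolding h_def[symmetric] unfolding a_def[symmetric] unfolding r_def[symmetric] 
      unfolding r_def ur[symmetric] using ur r_def by simp
    also have "\<dots> = y * (-12 * (r - y) * (3 * r^2 - 3 * y * r + y^2) / r^3) / (4 * h * a)" unfolding num ..
    also have "\<dots> = -3 * y * (r - y) * (3 * r^2 - 3 * y * r + y^2) / (r^3 * (h * a))"
      using r0 apos hp by (simp add: divide_simps) (simp add: algebra_simps)
    finally show ?thesis .
  qed
  have n1: "0 \<le> 3 * r^2 - 3 * y * r + y^2"
  proof -
    have "3 * r^2 - 3 * y * r + y^2 = 3 * r * (r - y) + y^2" by (simp add: power2_eq_square algebra_simps)
    also have "\<dots> \<ge> 0" using r r0 by (intro add_nonneg_nonneg mult_nonneg_nonneg) auto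
    finally show ?thesis .
  qed
  have n2: "3 * r^2 - 3 * y * r + y^2 \<le> 3 * r^2"
  proof -
    have "y * y \<le> y * (3 * r)" using r y by (intro mult_left_mono) auto
    then show ?thesis by (simp add: power2_eq_square algebra_simps)
  qed
  have hp: "h > 0" using hge r0 by (smt (verit) zero_less_power2)
  have "\<bar>G2 y u\<bar> = 3 * y * (r - y) * (3 * r^2 - 3 * y * r + y^2) / (r^3 * (h * a))"
    unfolding G2e using r y n1 apos r0 hp by (simp add: abs_mult abs_divide)
  also have "\<dots> \<le> 3 * y * r * (3 * r^2) / (r^3 * (r^2 * r))"
  proof (rule frac_le)
    show "0 \<le> 3 * y * r * (3 * r^2)" using y r0 by simp
    show "3 * y * (r - y) * (3 * r^2 - 3 * y * r + y^2) \<le> 3 * y * r * (3 * r^2)"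
      by (rule mult_mono) (use y r n1 n2 in auto)
    show "0 < r^3 * (r^2 * r)" using r0 by simp
    show "r^3 * (r^2 * r) \<le> r^3 * (h * a)"
      by (intro mult_left_mono mult_mono) (use r0 hge a0 hp in auto)
  qed
  also have "\<dots> = 9 * y / r^3" using r0 by (simp add: field_simps power2_eq_square power3_eq_cube)
  finally show "\<bar>G2 y u\<bar> \<le> 9 * y / (sqrt u)^3" unfolding r_def .
qed

lemma phi1_bound:
  assumes y: "y > 0" and u: "u \<ge> 0" and w: "0 \<le> w" "w \<le> 4 * sqrt u + 3"
  shows "\<bar>phi1dd y u\<bar> * (w * (4 * u)) + \<bar>phi1d y u\<bar> * (3 * w + 1) \<le> 180 * y + 138"
proof (cases "u \<le> y^2")
  case True
  have "sqrt u \<le> y" using True y by (metis abs_of_pos real_sqrt_abs real_sqrt_le_mono)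
  then show ?thesis using True w y by (simp add: phi1d_def phi1dd_def)
next
  case False
  then have u2: "u > y^2" by simp
  define r where "r = sqrt u"
  have r: "r > y" using u2 y unfolding r_def by (metis abs_of_pos real_less_rsqrt)
  have r0: "r > 0" using r y by simp
  have ur: "u = r^2" using u r_def by simp
  note b = G12_bounds[OF y u2, unfolded r_def[symmetric]]
  have "\<bar>phi1dd y u\<bar> * (w * (4 * u)) \<le> 9 * y / r^3 * (w * (4 * u))"
    using False b w u by (intro mult_right_mono) (auto simp: phi1dd_def)
  also have "\<dots> = 36 * (y / r) * w" unfolding ur using r0 by (simp add: field_simps power2_eq_square power3_eq_cube)
  finally have t1: "\<bar>phi1dd y u\<bar> * (w * (4 * u)) \<le> 36 * (y / r) * w" .
  have "\<bar>phi1d y u\<bar> * (3 * w + 1) \<le> 3 * y / r * (3 * w + 1)"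
    using False b w by (intro mult_right_mono) (auto simp: phi1d_def)
  also have "\<dots> = (y / r) * (9 * w + 3)" by (simp add: field_simps)
  finally have t2: "\<bar>phi1d y u\<bar> * (3 * w + 1) \<le> (y / r) * (9 * w + 3)" .
  have yr: "y / r \<le> 1" "0 \<le> y / r" using r y r0 by auto
  have "36 * (y / r) * w + (y / r) * (9 * w + 3) = (y / r) * (45 * w + 3)" by (simp add: algebra_simps)
  also have "\<dots> \<le> (y / r) * (45 * (4 * r + 3) + 3)"
    using w yr unfolding r_def by (intro mult_left_mono) auto
  also have "\<dots> = 180 * y + 138 * (y / r)" using r0 by (simp add: field_simps)
  also have "\<dots> \<le> 180 * y + 138" using yr by simp
  finally show ?thesis using t1 t2 by simp
qed

lemma sq_le_sqrt: assumes "0 \<le> b" "a^2 \<le> b" shows "\<bar>a\<bar> \<le> sqrt b"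
proof -
  have "sqrt (a^2) \<le> sqrt b" using assms(2) by (rule real_sqrt_le_mono)
  then show ?thesis by simp
qed

lemma P_bounds:
  assumes z: "z > 0" and t: "t \<ge> z"
  shows "\<bar>P1 z t\<bar> \<le> 3 * z" "\<bar>P2 z t\<bar> * (2 * t + 3) \<le> 5 * z + 6"
proof -
  define g where "g = gp z t"
  have g0: "g > 0" unfolding g_def by (rule gp_pos[OF z])
  define a where "a = sqrt g"
  have a0: "a > 0" using g0 a_def by simp
  have ga: "g = a^2" using g0 a_def by simp
  have gdef: "g = 6 * (t - 2 * z / 3)^2 + z^2 / 3" unfolding g_def gp_def power2_commute[of "2 * z / 3" t] ..
  have w0: "t - 2 * z / 3 \<ge> t / 3" using t by linarith
  have t0: "t > 0" using t z by linarith
  have "(t / 3)^2 \<le> (t - 2 * z / 3)^2" using w0 t0 by (intro power_mono) auto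
  then have m1: "6 * (t / 3)^2 \<le> 6 * (t - 2 * z / 3)^2" by linarith
  have e1: "6 * (t / 3)^2 = 2 * t^2 / 3" by (simp add: power2_eq_square)
  have gt: "g \<ge> 2 * t^2 / 3" unfolding gdef using m1 e1 zero_le_power2[of z] by linarith
  have zt: "z / 3 \<le> t - 2 * z / 3" using t by linarith
  have "(z / 3)^2 \<le> (t - 2 * z / 3)^2" by (rule power_mono[OF zt]) (use z in linarith)
  moreover have "(z / 3)^2 = z^2 / 9" by (simp add: power2_eq_square)
  ultimately have "z^2 / 9 \<le> (t - 2 * z / 3)^2" by simp
  then have gz: "g \<ge> z^2" unfolding gdef by linarith
  have az: "a \<ge> z" by (rule power2_le_imp_le) (use gz a0 ga in auto)
  have "\<bar>6 * z * (t - 2 * z / 3)\<bar> \<le> 3 * z * a"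
  proof -
    have sq: "(2 * (t - 2 * z / 3))^2 \<le> g" unfolding gdef power_mult_distrib using zero_le_power2[of z] by simp
    have le: "\<bar>2 * (t - 2 * z / 3)\<bar> \<le> a" unfolding a_def by (rule sq_le_sqrt[OF _ sq]) (use g0 in linarith)
    have e: "\<bar>6 * z * (t - 2 * z / 3)\<bar> = 3 * z * \<bar>2 * (t - 2 * z / 3)\<bar>" using z by (simp only: abs_mult)
    show ?thesis unfolding e by (rule mult_left_mono[OF le]) (use z in simp)
  qed
  then show "\<bar>P1 z t\<bar> \<le> 3 * z" unfolding P1_def g_def[symmetric] a_def[symmetric] using a0
    by (simp add: abs_divide divide_le_eq)
  have P2e: "\<bar>P2 z t\<bar> = 2 * z^3 / (g * a)" unfolding P2_def g_def[symmetric] a_def[symmetric] using a0 g0 z by simp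
  have "16 * t^2 \<le> 25 * g" using gt g0 by linarith
  then have "(4 * t)^2 \<le> (5 * a)^2" unfolding ga by (simp add: power_mult_distrib)
  then have ta: "4 * t \<le> 5 * a" by (rule power2_le_imp_le) (use a0 in simp)
  have "\<bar>P2 z t\<bar> * (2 * t + 3) = (2 * z^3 * (2 * t) + 2 * z^3 * 3) / (g * a)"
    unfolding P2e by (simp add: field_simps)
  also have "\<dots> = (2 * z^3 * (2 * t)) / (g * a) + (2 * z^3 * 3) / (g * a)" by (simp add: add_divide_distrib)
  also have "\<dots> \<le> 5 * z + 6"
  proof (rule add_mono)
    have "2 * z^3 * (2 * t) \<le> 2 * z^3 * (5 * a) / 2" using ta z by simp
    also have "\<dots> = 5 * z * (z^2 * a)" by (simp add: power2_eq_square power3_eq_cube)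
    also have "\<dots> \<le> 5 * z * (g * a)" using gz a0 z by (intro mult_left_mono mult_right_mono) auto
    finally show "(2 * z^3 * (2 * t)) / (g * a) \<le> 5 * z" using g0 a0 by (simp add: divide_le_eq)
    have "2 * z^3 * 3 = 6 * (z^2 * z)" by (simp add: power2_eq_square power3_eq_cube)
    also have "\<dots> \<le> 6 * (g * a)" using gz az z g0 by (intro mult_left_mono mult_mono) auto
    finally show "(2 * z^3 * 3) / (g * a) \<le> 6" using g0 a0 by (simp add: divide_le_eq)
  qed
  finally show "\<bar>P2 z t\<bar> * (2 * t + 3) \<le> 5 * z + 6" .
qed

lemma M_bounds:
  assumes z: "z > 0" and t: "t \<le> -z"
  shows "\<bar>M1 z t\<bar> \<le> 3 * z" "\<bar>M2 z t\<bar> \<le> 2"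
proof -
  define g where "g = gm z t"
  have g0: "g > 0" unfolding g_def by (rule gm_pos[OF z])
  define a where "a = sqrt g"
  have a0: "a > 0" using g0 a_def by simp
  have ga: "g = a^2" using g0 a_def by simp
  have gdef: "g = 6 * (t + 2 * z / 3)^2 + z^2 / 3" unfolding g_def gm_def add.commute[of "2 * z / 3" t] ..
  have zt: "z / 3 \<le> - (t + 2 * z / 3)" using t by linarith
  have "(z / 3)^2 \<le> (- (t + 2 * z / 3))^2" by (rule power_mono[OF zt]) (use z in linarith)
  then have "(z / 3)^2 \<le> (t + 2 * z / 3)^2" by (simp only: power2_minus)
  moreover have "(z / 3)^2 = z^2 / 9" by (simp add: power2_eq_square)
  ultimately have "z^2 / 9 \<le> (t + 2 * z / 3)^2" by simp
  then have gz: "g \<ge> z^2" unfolding gdef by linarith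
  have az: "a \<ge> z" by (rule power2_le_imp_le) (use gz a0 ga in auto)
  have "\<bar>6 * z * (t + 2 * z / 3)\<bar> \<le> 3 * z * a"
  proof -
    have sq: "(2 * (t + 2 * z / 3))^2 \<le> g" unfolding gdef power_mult_distrib using zero_le_power2[of z] by simp
    have le: "\<bar>2 * (t + 2 * z / 3)\<bar> \<le> a" unfolding a_def by (rule sq_le_sqrt[OF _ sq]) (use g0 in linarith)
    have e: "\<bar>6 * z * (t + 2 * z / 3)\<bar> = 3 * z * \<bar>2 * (t + 2 * z / 3)\<bar>" using z by (simp only: abs_mult)
    show ?thesis unfolding e by (rule mult_left_mono[OF le]) (use z in simp)
  qed
  then show "\<bar>M1 z t\<bar> \<le> 3 * z" unfolding M1_def g_def[symmetric] a_def[symmetric] using a0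
    by (simp add: abs_divide divide_le_eq)
  have M2e: "\<bar>M2 z t\<bar> = 2 * z^3 / (g * a)" unfolding M2_def g_def[symmetric] a_def[symmetric] using a0 g0 z by simp
  have "2 * z^3 = 2 * (z^2 * z)" by (simp add: power2_eq_square power3_eq_cube)
  also have "\<dots> \<le> 2 * (g * a)" using gz az z g0 by (intro mult_left_mono mult_mono) auto
  finally show "\<bar>M2 z t\<bar> \<le> 2" unfolding M2e using g0 a0 by (simp add: divide_le_eq)
qed

lemma phi2_bound:
  assumes z: "z > 0" and t: "t \<ge> -3/2"
  shows "\<bar>phi2dd z t\<bar> * (2 * t + 3) + \<bar>phi2d z t\<bar> \<le> 8 * z + 6"
proof -
  have w0: "0 \<le> 2 * t + 3" using t by simp
  consider "t > z" | "t \<le> z" "t > -z" | "t \<le> -z" by linarith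
  then show ?thesis
  proof cases
    case 1
    then have "phi2dd z t = P2 z t" "phi2d z t = P1 z t" by (auto simp: phi2dd_def phi2d_def)
    then show ?thesis using P_bounds[OF z, of t] 1 by simp
  next
    case 2
    then have e: "phi2dd z t = 2" "phi2d z t = 2 * t" by (auto simp: phi2dd_def phi2d_def)
    show ?thesis unfolding e using 2 w0 by (simp add: abs_mult)
  next
    case 3
    then have e: "phi2dd z t = M2 z t" "phi2d z t = M1 z t" using z by (auto simp: phi2dd_def phi2d_def)
    have "2 * t + 3 \<le> 3" using 3 z by simp
    then have "\<bar>M2 z t\<bar> * (2 * t + 3) \<le> 2 * 3" using M_bounds(2)[OF z 3] w0 by (intro mult_mono) auto
    then show ?thesis unfolding e using M_bounds(1)[OF z 3] z by simp
  qed
qed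

definition LL :: "'a::metric_space set \<Rightarrow> ('a \<Rightarrow> 'b::metric_space) \<Rightarrow> bool" where
  "LL S f \<longleftrightarrow> (\<exists>C. C-lipschitz_on S f)"

lemma LL_subset: "LL T f \<Longrightarrow> S \<subseteq> T \<Longrightarrow> LL S f"
  unfolding LL_def using lipschitz_on_subset by blast

lemma LL_const: "LL S (\<lambda>x. c)"
  unfolding LL_def using lipschitz_on_constant by blast

lemma LL_id: "LL S (\<lambda>x. x)"
  unfolding LL_def using lipschitz_on_id by blast

lemma LL_compose: assumes "LL S f" "LL T g" "f ` S \<subseteq> T" shows "LL S (\<lambda>x. g (f x))"
proof -
  obtain C where C: "C-lipschitz_on S f" using assms unfolding LL_def by blast
  obtain D where D: "D-lipschitz_on T g" using assms unfolding LL_def by blast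
  show ?thesis unfolding LL_def using lipschitz_on_compose2[OF C lipschitz_on_subset[OF D assms(3)]] by blast
qed

lemma LL_add: fixes f g :: "'a::metric_space \<Rightarrow> 'b::real_normed_vector"
  assumes "LL S f" "LL S g" shows "LL S (\<lambda>x. f x + g x)"
proof -
  obtain C where C: "C-lipschitz_on S f" using assms unfolding LL_def by blast
  obtain D where D: "D-lipschitz_on S g" using assms unfolding LL_def by blast
  show ?thesis unfolding LL_def using lipschitz_on_add[OF C D] by blast
qed

lemma LL_minus: fixes f :: "'a::metric_space \<Rightarrow> 'b::real_normed_vector"
  assumes "LL S f" shows "LL S (\<lambda>x. - f x)"
proof -
  obtain C where C: "C-lipschitz_on S f" using assms unfolding LL_def by blast
  show ?thesis unfolding LL_def using lipschitz_on_minus[OF C] by blast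
qed

lemma LL_diff: fixes f g :: "'a::metric_space \<Rightarrow> 'b::real_normed_vector"
  assumes "LL S f" "LL S g" shows "LL S (\<lambda>x. f x - g x)"
proof -
  obtain C where C: "C-lipschitz_on S f" using assms unfolding LL_def by blast
  obtain D where D: "D-lipschitz_on S g" using assms unfolding LL_def by blast
  show ?thesis unfolding LL_def using lipschitz_on_diff[OF C D] by blast
qed

lemma LL_linear: "bounded_linear L \<Longrightarrow> LL S f \<Longrightarrow> LL S (\<lambda>x. L (f x))"
proof -
  assume L: "bounded_linear L" and f: "LL S f"
  then obtain K where K: "\<And>x. norm (L x) \<le> norm x * K" "K > 0"
    using bounded_linear.pos_bounded by blast
  have "K-lipschitz_on UNIV L"
  proof (rule lipschitz_onI)
    fix x y
    have "norm (L x - L y) = norm (L (x - y))" using linear_diff[OF bounded_linear.linear[OF L]] by simp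
    also have "\<dots> \<le> K * norm (x - y)" using K(1)[of "x - y"] by (simp add: mult.commute)
    finally show "dist (L x) (L y) \<le> K * dist x y" by (simp add: dist_norm)
  qed (use K in simp)
  then have "LL UNIV L" unfolding LL_def by blast
  then show ?thesis using LL_compose[OF f] by blast
qed

lemma LL_bounded:
  fixes f :: "'a::metric_space \<Rightarrow> 'b::metric_space"
  assumes "LL S f" "bounded S" shows "bounded (f ` S)"
proof (cases "S = {}")
  case True then show ?thesis by simp
next
  case False
  then obtain x0 where x0: "x0 \<in> S" by blast
  obtain C where C: "C-lipschitz_on S f" using assms unfolding LL_def by blast
  obtain B where B: "\<And>x. x \<in> S \<Longrightarrow> dist x0 x \<le> B" using assms(2) unfolding bounded_any_center[of S x0] by blast
  show ?thesis unfolding bounded_def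
  proof (intro exI ballI)
    fix y assume "y \<in> f ` S"
    then obtain x where x: "x \<in> S" "y = f x" by blast
    have "dist (f x0) (f x) \<le> C * dist x0 x" using lipschitz_onD[OF C x0 x(1)] .
    also have "\<dots> \<le> C * B" using B[OF x(1)] lipschitz_on_nonneg[OF C] by (intro mult_left_mono) auto
    finally show "dist (f x0) y \<le> C * B" using x by simp
  qed
qed

lemma LL_bounded_norm:
  fixes f :: "'a::metric_space \<Rightarrow> 'b::real_normed_vector"
  assumes "LL S f" "bounded S" obtains B where "B > 0" "\<And>x. x \<in> S \<Longrightarrow> norm (f x) \<le> B"
  using LL_bounded[OF assms] unfolding bounded_pos by auto

lemma LL_bilinear:
  fixes f :: "'a::metric_space \<Rightarrow> 'b::real_normed_vector" and g :: "'a \<Rightarrow> 'c::real_normed_vector"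
  assumes bb: "bounded_bilinear pr" and S: "bounded S" and f: "LL S f" and g: "LL S g"
  shows "LL S (\<lambda>x. pr (f x) (g x))"
proof -
  obtain Bf where Bf: "\<And>x. x \<in> S \<Longrightarrow> norm (f x) \<le> Bf" "Bf > 0" using LL_bounded_norm[OF f S] by metis
  obtain Bg where Bg: "\<And>x. x \<in> S \<Longrightarrow> norm (g x) \<le> Bg" "Bg > 0" using LL_bounded_norm[OF g S] by metis
  obtain Cf where Cf: "Cf-lipschitz_on S f" using f unfolding LL_def by blast
  obtain Cg where Cg: "Cg-lipschitz_on S g" using g unfolding LL_def by blast
  obtain K where K: "\<And>a b. norm (pr a b) \<le> norm a * norm b * K" "K > 0"
    using bounded_bilinear.pos_bounded[OF bb] by blast
  have "(K * (Bf * Cg + Cf * Bg))-lipschitz_on S (\<lambda>x. pr (f x) (g x))"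
  proof (rule lipschitz_onI)
    fix x y assume x: "x \<in> S" and y: "y \<in> S"
    have e: "pr (f x) (g x) - pr (f y) (g y) = pr (f x) (g x - g y) + pr (f x - f y) (g y)"
      by (simp add: bounded_bilinear.diff_left[OF bb] bounded_bilinear.diff_right[OF bb])
    have "dist (pr (f x) (g x)) (pr (f y) (g y)) = norm (pr (f x) (g x - g y) + pr (f x - f y) (g y))"
      unfolding dist_norm e ..
    also have "\<dots> \<le> norm (f x) * norm (g x - g y) * K + norm (f x - f y) * norm (g y) * K"
      using K(1) norm_triangle_le add_mono by blast
    also have "\<dots> \<le> Bf * (Cg * dist x y) * K + (Cf * dist x y) * Bg * K"
      using lipschitz_onD[OF Cg x y] lipschitz_onD[OF Cf x y] Bf Bg x y K(2) lipschitz_on_nonneg[OF Cf] zero_le_dist[of x y]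
      by (intro add_mono mult_right_mono mult_mono) (auto simp: dist_norm)
    also have "\<dots> = (K * (Bf * Cg + Cf * Bg)) * dist x y" by (simp add: algebra_simps)
    finally show "dist (pr (f x) (g x)) (pr (f y) (g y)) \<le> (K * (Bf * Cg + Cf * Bg)) * dist x y" .
  next
    show "0 \<le> K * (Bf * Cg + Cf * Bg)"
      using K(2) Bf(2) Bg(2) lipschitz_on_nonneg[OF Cf] lipschitz_on_nonneg[OF Cg] by simp
  qed
  then show ?thesis unfolding LL_def by blast
qed

lemma LL_mult: fixes f g :: "'a::metric_space \<Rightarrow> real"
  shows "bounded S \<Longrightarrow> LL S f \<Longrightarrow> LL S g \<Longrightarrow> LL S (\<lambda>x. f x * g x)"
  using LL_bilinear[OF bounded_bilinear_mult] by blast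

lemma LL_scaleR: fixes f :: "'a::metric_space \<Rightarrow> real" and g :: "'a \<Rightarrow> 'b::real_normed_vector"
  shows "bounded S \<Longrightarrow> LL S f \<Longrightarrow> LL S g \<Longrightarrow> LL S (\<lambda>x. f x *\<^sub>R g x)"
  using LL_bilinear[OF bounded_bilinear_scaleR] by blast

lemma LL_inverse:
  fixes f :: "'a::metric_space \<Rightarrow> real"
  assumes f: "LL S f" and c: "c > 0" "\<And>x. x \<in> S \<Longrightarrow> \<bar>f x\<bar> \<ge> c"
  shows "LL S (\<lambda>x. inverse (f x))"
proof -
  obtain C where C: "C-lipschitz_on S f" using f unfolding LL_def by blast
  have "(C / c^2)-lipschitz_on S (\<lambda>x. inverse (f x))"
  proof (rule lipschitz_onI)
    fix x y assume x: "x \<in> S" and y: "y \<in> S"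
    have fx: "\<bar>f x\<bar> \<ge> c" and fy: "\<bar>f y\<bar> \<ge> c" using c x y by auto
    have nz: "f x \<noteq> 0" "f y \<noteq> 0" using fx fy c by auto
    have "dist (inverse (f x)) (inverse (f y)) = \<bar>f y - f x\<bar> / (\<bar>f x\<bar> * \<bar>f y\<bar>)"
      using nz by (simp add: dist_real_def inverse_eq_divide field_simps abs_divide abs_mult)
    also have "\<dots> \<le> (C * dist x y) / (c * c)"
      using lipschitz_onD[OF C y x] fx fy c by (intro frac_le mult_mono) (auto simp: dist_real_def dist_commute)
    also have "\<dots> = (C / c^2) * dist x y" by (simp add: power2_eq_square)
    finally show "dist (inverse (f x)) (inverse (f y)) \<le> (C / c^2) * dist x y" .
  next
    show "0 \<le> C / c^2" using lipschitz_on_nonneg[OF C] by simp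
  qed
  then show ?thesis unfolding LL_def by blast
qed

lemma LL_divide:
  fixes f g :: "'a::metric_space \<Rightarrow> real"
  assumes "bounded S" "LL S f" "LL S g" "c > 0" "\<And>x. x \<in> S \<Longrightarrow> \<bar>g x\<bar> \<ge> c"
  shows "LL S (\<lambda>x. f x / g x)"
  unfolding divide_inverse by (rule LL_mult) (use assms LL_inverse in auto)

lemma LL_max: fixes f :: "'a::metric_space \<Rightarrow> real" shows "LL S f \<Longrightarrow> LL S (\<lambda>x. max (f x) c)"
proof -
  assume f: "LL S f"
  have "1-lipschitz_on UNIV (\<lambda>u::real. max u c)"
    by (rule lipschitz_onI) (auto simp: dist_real_def max_def)
  then show ?thesis using LL_compose[OF f, of UNIV "\<lambda>u. max u c"] unfolding LL_def by blast
qed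

lemma LL_min: fixes f :: "'a::metric_space \<Rightarrow> real" shows "LL S f \<Longrightarrow> LL S (\<lambda>x. min (f x) c)"
proof -
  assume f: "LL S f"
  have "1-lipschitz_on UNIV (\<lambda>u::real. min u c)"
    by (rule lipschitz_onI) (auto simp: dist_real_def min_def)
  then show ?thesis using LL_compose[OF f, of UNIV "\<lambda>u. min u c"] unfolding LL_def by blast
qed

lemma LL_sqrt:
  fixes f :: "'a::metric_space \<Rightarrow> real"
  assumes f: "LL S f" and c: "c > 0" "\<And>x. x \<in> S \<Longrightarrow> f x \<ge> c"
  shows "LL S (\<lambda>x. sqrt (f x))"
proof -
  have "(1 / (2 * sqrt c))-lipschitz_on {c..} sqrt"
  proof (rule lipschitz_onI)
    fix a b :: real assume a: "a \<in> {c..}" and b: "b \<in> {c..}"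
    have sa: "sqrt a \<ge> sqrt c" "sqrt b \<ge> sqrt c" using a b by auto
    have sc: "sqrt c > 0" using c by simp
    have "\<bar>a - b\<bar> = \<bar>sqrt a - sqrt b\<bar> * (sqrt a + sqrt b)"
    proof -
      have "a - b = (sqrt a - sqrt b) * (sqrt a + sqrt b)" using a b c
        by (simp add: algebra_simps)
      then show ?thesis using sa sc by (simp add: abs_mult)
    qed
    moreover have "sqrt a + sqrt b \<ge> 2 * sqrt c" using sa by linarith
    ultimately have "\<bar>sqrt a - sqrt b\<bar> * (2 * sqrt c) \<le> \<bar>a - b\<bar>"
      by (metis abs_ge_zero mult_left_mono)
    then show "dist (sqrt a) (sqrt b) \<le> 1 / (2 * sqrt c) * dist a b"
      using sc by (simp add: dist_real_def field_simps)
  qed (use c in simp)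
  then have "LL {c..} sqrt" unfolding LL_def by blast
  then show ?thesis by (rule LL_compose[OF f]) (use c in auto)
qed

lemma phi1dd_max: "y > 0 \<Longrightarrow> phi1dd y u = G2 y (max u (y^2))"
  using G_at(3)[of y] by (auto simp: phi1dd_def max_def)
lemma phi1d_max: "y > 0 \<Longrightarrow> phi1d y u = G1 y (max u (y^2))"
  using G_at(2)[of y] by (auto simp: phi1d_def max_def)

lemma LL_cmult: fixes f :: "'a::metric_space \<Rightarrow> real" shows "LL S f \<Longrightarrow> LL S (\<lambda>x. c * f x)"
  using LL_linear[OF bounded_linear_mult_right[of c]] by blast

lemma G_LL:
  fixes S :: "real set"
  assumes y: "y > 0" and S: "bounded S"
  shows "LL S (\<lambda>u. G2 y (max u (y^2)))" "LL S (\<lambda>u. G1 y (max u (y^2)))"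
proof -
  define v where "v u = max u (y^2)" for u
  have v: "LL S v" unfolding v_def by (intro LL_max LL_id)
  have vy: "v u \<ge> y^2" for u unfolding v_def by simp
  have y2: "y^2 > 0" using y by simp
  have v0: "v u \<ge> 0" for u using vy[of u] y2 by linarith
  have h0: "hS y (v u) \<ge> 0" for u using hS_ge[OF y vy[of u]] v0[of u] by linarith
  have sv: "LL S (\<lambda>u. sqrt (v u))" by (rule LL_sqrt[OF v y2 vy])
  have svy: "sqrt (v u) \<ge> y" for u using vy[of u] y by (metis abs_of_pos real_sqrt_abs real_sqrt_le_mono)
  have h: "LL S (\<lambda>u. hS y (v u))" unfolding hS_def
    by (intro LL_add LL_diff LL_cmult v sv LL_const)
  have hy: "hS y (v u) \<ge> y^2" for u using hS_ge[OF y vy[of u]] vy[of u] by linarith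
  have sh: "LL S (\<lambda>u. sqrt (hS y (v u)))" by (rule LL_sqrt[OF h y2 hy])
  have shy: "sqrt (hS y (v u)) \<ge> y" for u using hy[of u] y by (metis abs_of_pos real_sqrt_abs real_sqrt_le_mono)
  have y3: "y^3 > 0" using y by simp
  have t1: "LL S (\<lambda>u. 2 * y / (v u * sqrt (v u)))"
  proof (rule LL_divide[OF S LL_const LL_mult[OF S v sv] y3])
    fix u
    have "y^2 * y \<le> v u * sqrt (v u)" using vy[of u] svy[of u] y v0[of u] by (intro mult_mono) auto
    then show "y^3 \<le> \<bar>v u * sqrt (v u)\<bar>" by (simp add: power2_eq_square power3_eq_cube)
  qed
  have t2: "LL S (\<lambda>u. 4 * y / sqrt (v u))"
    by (rule LL_divide[OF S LL_const sv y]) (use svy y in \<open>auto intro: order_trans[OF _ abs_ge_self]\<close>)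
  have t3: "LL S (\<lambda>u. 6 - 4 * y / sqrt (v u))" by (intro LL_diff LL_const t2)
  have y4: "4 * y^3 > 0" using y by simp
  have t4: "\<bar>4 * hS y (v u) * sqrt (hS y (v u))\<bar> \<ge> 4 * y^3" for u
  proof -
    have "y^2 * y \<le> hS y (v u) * sqrt (hS y (v u))" using hy[of u] shy[of u] y h0[of u] by (intro mult_mono) auto
    then show ?thesis using y h0[of u] by (simp add: power2_eq_square power3_eq_cube abs_mult mult.assoc)
  qed
  have num: "LL S (\<lambda>u. y * (2 * hS y (v u) * (2 * y / (v u * sqrt (v u))) - (6 - 4 * y / sqrt (v u))^2))"
    unfolding power2_eq_square
    by (intro LL_cmult LL_diff LL_mult[OF S] t1 t3 h)
  show "LL S (\<lambda>u. G2 y (max u (y^2)))"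
    unfolding G2_def v_def[symmetric]
    by (rule LL_divide[OF S num _ y4 t4]) (intro LL_mult[OF S] LL_cmult h sh)
  have y2': "2 * y > 0" using y by simp
  show "LL S (\<lambda>u. G1 y (max u (y^2)))"
    unfolding G1_def v_def[symmetric]
  proof (rule LL_divide[OF S _ _ y2'])
    show "LL S (\<lambda>x. y * (6 - 4 * y / sqrt (v x)))" by (intro LL_cmult t3)
    show "LL S (\<lambda>x. 2 * sqrt (hS y (v x)))" by (intro LL_cmult sh)
    fix u show "2 * y \<le> \<bar>2 * sqrt (hS y (v u))\<bar>" using shy[of u] y by simp
  qed
qed

lemma phi1_LL: assumes "y > 0" "bounded S" shows "LL S (phi1dd y)" "LL S (phi1d y)"
  using G_LL[OF assms] phi1dd_max[OF assms(1)] phi1d_max[OF assms(1)] by (simp_all add: fun_eq_iff[symmetric] LL_def)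

lemma PM_LL:
  fixes S :: "real set"
  assumes z: "z > 0" and S: "bounded S" and w: "LL S w"
  shows "LL S (\<lambda>t. P2 z (w t))" "LL S (\<lambda>t. P1 z (w t))" "LL S (\<lambda>t. M2 z (w t))" "LL S (\<lambda>t. M1 z (w t))"
proof -
  have c0: "z^2 / 3 > 0" using z by simp
  have gpl: "gp z v \<ge> z^2 / 3" for v unfolding gp_def by simp
  have gml: "gm z v \<ge> z^2 / 3" for v unfolding gm_def by simp
  have gp: "LL S (\<lambda>t. gp z (w t))" unfolding gp_def power2_eq_square
    by (intro LL_add LL_cmult LL_mult[OF S] LL_diff LL_const w)
  have gm: "LL S (\<lambda>t. gm z (w t))" unfolding gm_def power2_eq_square
    by (intro LL_add LL_cmult LL_mult[OF S] LL_diff LL_const w)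
  have sgp: "LL S (\<lambda>t. sqrt (gp z (w t)))" by (rule LL_sqrt[OF gp c0 gpl])
  have sgm: "LL S (\<lambda>t. sqrt (gm z (w t)))" by (rule LL_sqrt[OF gm c0 gml])
  have cs: "sqrt (z^2 / 3) > 0" using c0 by simp
  have lowp: "sqrt (z^2 / 3) \<le> \<bar>sqrt (gp z v)\<bar>" for v using order_trans[OF real_sqrt_le_mono[OF gpl[of v]] abs_ge_self] .
  have lowm: "sqrt (z^2 / 3) \<le> \<bar>sqrt (gm z v)\<bar>" for v using order_trans[OF real_sqrt_le_mono[OF gml[of v]] abs_ge_self] .
  have cc: "z^2 / 3 * sqrt (z^2 / 3) > 0" using c0 cs by simp
  have lowp2: "z^2 / 3 * sqrt (z^2 / 3) \<le> \<bar>gp z v * sqrt (gp z v)\<bar>" for v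
  proof -
    have "z^2 / 3 * sqrt (z^2 / 3) \<le> \<bar>gp z v\<bar> * \<bar>sqrt (gp z v)\<bar>"
      by (rule mult_mono[OF order_trans[OF gpl[of v] abs_ge_self] lowp[of v]]) (use c0 cs in auto)
    then show ?thesis by (simp only: abs_mult)
  qed
  have lowm2: "z^2 / 3 * sqrt (z^2 / 3) \<le> \<bar>gm z v * sqrt (gm z v)\<bar>" for v
  proof -
    have "z^2 / 3 * sqrt (z^2 / 3) \<le> \<bar>gm z v\<bar> * \<bar>sqrt (gm z v)\<bar>"
      by (rule mult_mono[OF order_trans[OF gml[of v] abs_ge_self] lowm[of v]]) (use c0 cs in auto)
    then show ?thesis by (simp only: abs_mult)
  qed
  show "LL S (\<lambda>t. P2 z (w t))" unfolding P2_def
    by (rule LL_divide[OF S LL_const LL_mult[OF S gp sgp] cc lowp2])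
  show "LL S (\<lambda>t. M2 z (w t))" unfolding M2_def
    by (rule LL_divide[OF S LL_const LL_mult[OF S gm sgm] cc lowm2])
  show "LL S (\<lambda>t. P1 z (w t))" unfolding P1_def
    by (rule LL_divide[OF S _ sgp cs lowp]) (intro LL_cmult LL_diff w LL_const)
  show "LL S (\<lambda>t. M1 z (w t))" unfolding M1_def
    by (rule LL_divide[OF S _ sgm cs lowm]) (intro LL_cmult LL_add w LL_const)
qed

lemma phi2dd_eq: "z > 0 \<Longrightarrow> phi2dd z t = P2 z (max t z) + M2 z (min t (-z)) - 2"
  using PM_at[of z] by (auto simp: phi2dd_def max_def min_def)
lemma phi2d_eq: "z > 0 \<Longrightarrow> phi2d z t = P1 z (max t z) + M1 z (min t (-z)) + 2 * max (min t z) (-z)"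
  using PM_at[of z] by (auto simp: phi2d_def max_def min_def)

lemma phi2_LL: assumes z: "z > 0" and S: "bounded S" shows "LL S (phi2dd z)" "LL S (phi2d z)"
proof -
  have "LL S (\<lambda>t. P2 z (max t z) + M2 z (min t (-z)) - 2)"
    by (intro LL_diff LL_add PM_LL[OF z S] LL_max LL_min LL_id LL_const)
  moreover have "phi2dd z = (\<lambda>t. P2 z (max t z) + M2 z (min t (-z)) - 2)" by (rule ext) (rule phi2dd_eq[OF z])
  ultimately show "LL S (phi2dd z)" by simp
  have "LL S (\<lambda>t. P1 z (max t z) + M1 z (min t (-z)) + 2 * max (min t z) (-z))"
    by (intro LL_add LL_cmult PM_LL[OF z S] LL_max LL_min LL_id LL_const)
  moreover have "phi2d z = (\<lambda>t. P1 z (max t z) + M1 z (min t (-z)) + 2 * max (min t z) (-z))" by (rule ext) (rule phi2d_eq[OF z])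
  ultimately show "LL S (phi2d z)" by simp
qed

lemma inner_mat_def: "(X::real^'n^'m) \<bullet> Y = (\<Sum>i\<in>UNIV. \<Sum>j\<in>UNIV. X$i$j * Y$i$j)"
  by (simp add: inner_vec_def)

lemma sum3_swap: "(\<Sum>i\<in>I. \<Sum>j\<in>J. \<Sum>k\<in>K. f i j k) = (\<Sum>k\<in>K. \<Sum>j\<in>J. \<Sum>i\<in>I. f i j k)"
proof -
  have "(\<Sum>i\<in>I. \<Sum>j\<in>J. \<Sum>k\<in>K. f i j k) = (\<Sum>i\<in>I. \<Sum>k\<in>K. \<Sum>j\<in>J. f i j k)"
    by (rule sum.cong[OF refl]) (rule sum.swap)
  also have "\<dots> = (\<Sum>k\<in>K. \<Sum>i\<in>I. \<Sum>j\<in>J. f i j k)" by (rule sum.swap)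
  also have "\<dots> = (\<Sum>k\<in>K. \<Sum>j\<in>J. \<Sum>i\<in>I. f i j k)"
    by (rule sum.cong[OF refl]) (rule sum.swap)
  finally show ?thesis .
qed

lemma inner_mat_mult_left:
  fixes X :: "real^'n^'m" and A :: "real^'k^'m" and B :: "real^'n^'k"
  shows "X \<bullet> (A ** B) = (transpose A ** X) \<bullet> B"
proof -
  have "X \<bullet> (A ** B) = (\<Sum>i\<in>UNIV. \<Sum>j\<in>UNIV. \<Sum>k\<in>UNIV. X$i$j * (A$i$k * B$k$j))"
    by (simp add: inner_mat_def matrix_matrix_mult_def sum_distrib_left)
  also have "\<dots> = (\<Sum>k\<in>UNIV. \<Sum>j\<in>UNIV. \<Sum>i\<in>UNIV. X$i$j * (A$i$k * B$k$j))"
    by (rule sum3_swap)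
  also have "\<dots> = (transpose A ** X) \<bullet> B"
    by (simp add: inner_mat_def matrix_matrix_mult_def transpose_def sum_distrib_left mult_ac)
  finally show ?thesis .
qed

lemma inner_transpose: "transpose (X::real^'n^'m) \<bullet> transpose Y = X \<bullet> Y"
  unfolding inner_mat_def by (subst sum.swap) (simp add: transpose_def)

lemma trace_transpose_mult: "trace (transpose (A::real^'n^'m) ** B) = A \<bullet> B"
  unfolding inner_mat_def by (subst sum.swap) (simp add: trace_def matrix_matrix_mult_def transpose_def)

lemma norm_mat_sq: "(norm (X::real^'n^'m))^2 = (\<Sum>i\<in>UNIV. \<Sum>j\<in>UNIV. (X$i$j)^2)"
  unfolding power2_norm_eq_inner inner_mat_def by (simp add: power2_eq_square)

lemma norm_transpose: "norm (transpose (X::real^'n^'m)) = norm X"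
  by (simp add: norm_eq_sqrt_inner inner_transpose)

lemma norm_mat_mult: "norm ((A::real^'k^'m) ** (B::real^'n^'k)) \<le> norm A * norm B"
proof -
  have cs: "((A ** B)$i$j)^2 \<le> (\<Sum>k\<in>UNIV. (A$i$k)^2) * (\<Sum>k\<in>UNIV. (B$k$j)^2)" for i j
  proof -
    have "(A ** B)$i$j = (A$i) \<bullet> (column j B)"
      by (simp add: matrix_matrix_mult_def inner_vec_def column_def)
    moreover have "((A$i) \<bullet> (column j B))^2 \<le> (norm (A$i))^2 * (norm (column j B))^2"
      using Cauchy_Schwarz_ineq[of "A$i" "column j B"] by (simp add: power2_norm_eq_inner)
    moreover have "(norm (A$i))^2 = (\<Sum>k\<in>UNIV. (A$i$k)^2)" "(norm (column j B))^2 = (\<Sum>k\<in>UNIV. (B$k$j)^2)"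
      unfolding power2_norm_eq_inner by (simp_all add: inner_vec_def column_def power2_eq_square)
    ultimately show ?thesis by simp
  qed
  have "(norm (A ** B))^2 \<le> (\<Sum>i\<in>UNIV. \<Sum>j\<in>UNIV. (\<Sum>k\<in>UNIV. (A$i$k)^2) * (\<Sum>k\<in>UNIV. (B$k$j)^2))"
    unfolding norm_mat_sq by (intro sum_mono cs)
  also have "\<dots> = (\<Sum>i\<in>UNIV. \<Sum>k\<in>UNIV. (A$i$k)^2) * (\<Sum>j\<in>UNIV. \<Sum>k\<in>UNIV. (B$k$j)^2)"
    by (rule sum_product[symmetric])
  also have "\<dots> = (norm A)^2 * (norm B)^2"
    unfolding norm_mat_sq by (subst (2) sum.swap) (rule refl)
  finally have "(norm (A ** B))^2 \<le> (norm A * norm B)^2" by (simp add: power_mult_distrib)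
  then show ?thesis by (rule power2_le_imp_le) simp
qed

lemma matrix_add_rdistrib': "((A::real^'k^'m) + B) ** (C::real^'n^'k) = A ** C + B ** C"
  by (vector matrix_matrix_mult_def sum.distrib algebra_simps)
lemma matrix_scaleR_left: "((c::real) *\<^sub>R (A::real^'k^'m)) ** (B::real^'n^'k) = c *\<^sub>R (A ** B)"
  by (vector matrix_matrix_mult_def sum_distrib_left algebra_simps)
lemma matrix_scaleR_right: "(A::real^'k^'m) ** ((c::real) *\<^sub>R (B::real^'n^'k)) = c *\<^sub>R (A ** B)"
  by (vector matrix_matrix_mult_def sum_distrib_left algebra_simps)
lemma matrix_diff_ldistrib': "(A::real^'k^'m) ** ((B::real^'n^'k) - C) = A ** B - A ** C"
  by (vector matrix_matrix_mult_def sum_subtractf algebra_simps)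
lemma matrix_diff_rdistrib': "((A::real^'k^'m) - B) ** (C::real^'n^'k) = A ** C - B ** C"
  by (vector matrix_matrix_mult_def sum_subtractf algebra_simps)
lemma transpose_add': "transpose ((A::real^'n^'m) + B) = transpose A + transpose B"
  by (vector transpose_def)
lemma transpose_diff': "transpose ((A::real^'n^'m) - B) = transpose A - transpose B"
  by (vector transpose_def)

lemma bb_matrix_mult: "bounded_bilinear (\<lambda>(A::real^'k^'m) (B::real^'n^'k). A ** B)"
proof (rule bounded_bilinear.intro)
  show "\<exists>K. \<forall>a b. norm ((a::real^'k^'m) ** (b::real^'n^'k)) \<le> norm a * norm b * K"
    by (rule exI[of _ 1]) (simp add: norm_mat_mult)
qed (simp_all add: matrix_add_rdistrib' matrix_add_ldistrib matrix_scaleR_left matrix_scaleR_right)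

lemma bl_transpose: "bounded_linear (transpose :: real^'n^'m \<Rightarrow> real^'m^'n)"
proof (rule bounded_linear_intro[of _ 1])
  show "transpose (x + y) = transpose x + transpose y" for x y :: "real^'n^'m" by (rule transpose_add')
  show "transpose (r *\<^sub>R x) = r *\<^sub>R transpose x" for r and x :: "real^'n^'m" by (rule transpose_scalar)
  show "norm (transpose x) \<le> norm x * 1" for x :: "real^'n^'m" by (simp add: norm_transpose)
qed

definition Nf :: "mat3 \<Rightarrow> real" where "Nf F = strainE F \<bullet> strainE F"
definition Tf :: "mat3 \<Rightarrow> real" where "Tf F = trace (strainE F)"
definition gN :: "mat3 \<Rightarrow> mat3" where "gN F = F ** (transpose F ** F - mat 1)"
definition HN :: "mat3 \<Rightarrow> mat3 \<Rightarrow> mat3" where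
  "HN F K = K ** (transpose F ** F) - K + F ** (transpose K ** F) + F ** (transpose F ** K)"

lemma strainE_sym: "transpose (strainE F) = strainE F"
  by (simp add: strainE_def transpose_scalar transpose_diff' matrix_transpose_mul)

lemma strainE_deriv: "(strainE has_derivative (\<lambda>K. (1/2) *\<^sub>R (transpose F ** K + transpose K ** F))) (at F)"
proof -
  have d: "((\<lambda>F. transpose F ** F) has_derivative (\<lambda>K. transpose F ** K + transpose K ** F)) (at F)"
    by (rule bounded_bilinear.FDERIV[OF bb_matrix_mult bounded_linear.has_derivative[OF bl_transpose has_derivative_ident] has_derivative_ident])
  have "((\<lambda>F. (1/2) *\<^sub>R (transpose F ** F - mat 1)) has_derivative (\<lambda>K. (1/2) *\<^sub>R ((transpose F ** K + transpose K ** F) - 0))) (at F)"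
    by (intro has_derivative_scaleR_right has_derivative_diff d has_derivative_const)
  then show ?thesis unfolding strainE_def[abs_def] by simp
qed

lemma Nf_deriv: "(Nf has_derivative (\<lambda>K. gN F \<bullet> K)) (at F)"
proof -
  let ?E = "strainE F"
  let ?D = "\<lambda>K. (1/2) *\<^sub>R (transpose F ** K + transpose K ** F)"
  have d: "(Nf has_derivative (\<lambda>K. ?E \<bullet> ?D K + ?D K \<bullet> ?E)) (at F)"
    unfolding Nf_def[abs_def]
    by (rule bounded_bilinear.FDERIV[OF bounded_bilinear_inner strainE_deriv strainE_deriv])
  have e1: "?E \<bullet> (transpose F ** K) = (F ** ?E) \<bullet> K" for K
    by (simp add: inner_mat_mult_left)
  have e2: "?E \<bullet> (transpose K ** F) = (F ** ?E) \<bullet> K" for K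
  proof -
    have "?E \<bullet> (transpose K ** F) = transpose ?E \<bullet> transpose (transpose K ** F)" by (simp add: inner_transpose)
    also have "\<dots> = ?E \<bullet> (transpose F ** K)" by (simp add: strainE_sym matrix_transpose_mul)
    finally show ?thesis using e1 by simp
  qed
  have e3: "?E \<bullet> ?D K + ?D K \<bullet> ?E = gN F \<bullet> K" for K
  proof -
    have "?E \<bullet> ?D K + ?D K \<bullet> ?E = 2 * (?E \<bullet> ?D K)" by (simp add: inner_commute)
    also have "\<dots> = ?E \<bullet> (transpose F ** K) + ?E \<bullet> (transpose K ** F)" by (simp add: inner_add_right)
    also have "\<dots> = (2 *\<^sub>R (F ** ?E)) \<bullet> K" using e1 e2 by simp
    also have "2 *\<^sub>R (F ** ?E) = gN F" unfolding gN_def strainE_def matrix_scaleR_right by simp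
    finally show ?thesis .
  qed
  show ?thesis using d unfolding e3 .
qed

lemma gN_deriv: "(gN has_derivative HN F) (at F)"
proof -
  have d: "((\<lambda>F. transpose F ** F) has_derivative (\<lambda>K. transpose F ** K + transpose K ** F)) (at F)"
    by (rule bounded_bilinear.FDERIV[OF bb_matrix_mult bounded_linear.has_derivative[OF bl_transpose has_derivative_ident] has_derivative_ident])
  have d2: "((\<lambda>F. transpose F ** F - mat 1) has_derivative (\<lambda>K. (transpose F ** K + transpose K ** F) - 0)) (at F)"
    by (intro has_derivative_diff d has_derivative_const)
  have "(gN has_derivative (\<lambda>K. F ** ((transpose F ** K + transpose K ** F) - 0) + K ** (transpose F ** F - mat 1))) (at F)"
    unfolding gN_def[abs_def]
    by (rule bounded_bilinear.FDERIV[OF bb_matrix_mult has_derivative_ident d2])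
  moreover have "(\<lambda>K. F ** ((transpose F ** K + transpose K ** F) - 0) + K ** (transpose F ** F - mat 1)) = HN F"
    by (rule ext) (simp add: HN_def matrix_add_ldistrib matrix_diff_ldistrib' algebra_simps)
  ultimately show ?thesis by simp
qed

lemma trace_scaleR: "trace ((c::real) *\<^sub>R (A::real^'n^'n)) = c * trace A"
  by (simp add: trace_def sum_distrib_left)

lemma Tf_eq: "Tf F = (F \<bullet> F - 3) / 2"
  by (simp add: Tf_def strainE_def trace_scaleR trace_sub trace_I trace_transpose_mult)

lemma Tf_deriv: "(Tf has_derivative (\<lambda>K. F \<bullet> K)) (at F)"
proof -
  have "((\<lambda>F. (1/2) * (F \<bullet> F - 3)) has_derivative (\<lambda>K. (1/2) * ((F \<bullet> K + K \<bullet> F) - 0))) (at F)"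
    by (intro has_derivative_mult_right has_derivative_diff has_derivative_inner has_derivative_ident has_derivative_const)
  moreover have "Tf = (\<lambda>F. (1/2) * (F \<bullet> F - 3))" by (rule ext) (simp add: Tf_eq)
  ultimately show ?thesis by (simp add: inner_commute)
qed

lemma Nf_norm: "Nf F = (norm (strainE F))^2"
  by (simp add: Nf_def power2_norm_eq_inner)

lemma Nf_nonneg: "Nf F \<ge> 0" by (simp add: Nf_norm)

lemma sqrt_Nf: "sqrt (Nf F) = norm (strainE F)" by (simp add: Nf_norm)

lemma gN_norm: "norm (gN F) \<le> norm F * (2 * sqrt (Nf F))"
proof -
  have "gN F = F ** (2 *\<^sub>R strainE F)" unfolding gN_def strainE_def by simp
  then have "norm (gN F) \<le> norm F * norm (2 *\<^sub>R strainE F)" using norm_mat_mult by metis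
  then show ?thesis by (simp add: sqrt_Nf)
qed

lemma gN_norm_sq: "(norm (gN F))^2 \<le> (norm F)^2 * (4 * Nf F)"
proof -
  have "(norm (gN F))^2 \<le> (norm F * (2 * sqrt (Nf F)))^2" by (rule power_mono[OF gN_norm]) simp
  also have "\<dots> = (norm F)^2 * (4 * Nf F)" using Nf_nonneg[of F] by (simp add: power_mult_distrib)
  finally show ?thesis .
qed

lemma HN_norm: "norm (HN F K) \<le> (3 * (norm F)^2 + 1) * norm K"
proof -
  have a: "norm (K ** (transpose F ** F)) \<le> norm K * (norm F * norm F)"
    by (rule order_trans[OF norm_mat_mult]) (intro mult_left_mono order_trans[OF norm_mat_mult], auto simp: norm_transpose)
  have b: "norm (F ** (transpose K ** F)) \<le> norm F * (norm K * norm F)"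
    by (rule order_trans[OF norm_mat_mult]) (intro mult_left_mono order_trans[OF norm_mat_mult], auto simp: norm_transpose)
  have c: "norm (F ** (transpose F ** K)) \<le> norm F * (norm F * norm K)"
    by (rule order_trans[OF norm_mat_mult]) (intro mult_left_mono order_trans[OF norm_mat_mult], auto simp: norm_transpose)
  have "norm (HN F K) \<le> norm (K ** (transpose F ** F)) + norm K + norm (F ** (transpose K ** F)) + norm (F ** (transpose F ** K))"
    unfolding HN_def by (intro norm_triangle_le add_mono norm_triangle_ineq4 order_refl)
  also have "\<dots> \<le> norm K * (norm F * norm F) + norm K + norm F * (norm K * norm F) + norm F * (norm F * norm K)"
    using a b c by linarith
  also have "\<dots> = (3 * (norm F)^2 + 1) * norm K" by (simp add: power2_eq_square algebra_simps)
  finally show ?thesis .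
qed

lemma normF_sq: "(norm F)^2 = 2 * Tf F + 3"
  by (simp add: Tf_eq power2_norm_eq_inner field_simps)

lemma norm_mat1: "norm (mat 1 :: mat3) = sqrt 3"
proof -
  have "(mat 1 :: mat3) \<bullet> mat 1 = trace (transpose (mat 1 :: mat3) ** mat 1)" by (simp only: trace_transpose_mult)
  also have "\<dots> = 3" by (simp add: trace_I)
  finally show ?thesis by (simp add: norm_eq_sqrt_inner)
qed

lemma Tf_le: "Tf F \<le> 2 * sqrt (Nf F)"
proof -
  have "Tf F = trace (transpose (mat 1 :: mat3) ** strainE F)" by (simp add: Tf_def)
  also have "\<dots> = mat 1 \<bullet> strainE F" by (rule trace_transpose_mult)
  also have "\<dots> \<le> norm (mat 1 :: mat3) * norm (strainE F)" by (rule norm_cauchy_schwarz)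
  also have "\<dots> \<le> 2 * norm (strainE F)"
  proof (rule mult_right_mono)
    have "sqrt 3 \<le> sqrt 4" by (rule real_sqrt_le_mono) simp
    also have "sqrt 4 = 2" using real_sqrt_abs[of 2] by simp
    finally show "norm (mat 1 :: mat3) \<le> 2" unfolding norm_mat1 .
  qed simp
  finally show ?thesis by (simp add: sqrt_Nf)
qed

lemma Tf_ge: "Tf F \<ge> -3/2"
  using normF_sq[of F] zero_le_power2[of "norm F"] by linarith

definition fb :: "real \<Rightarrow> real \<Rightarrow> real \<Rightarrow> real \<Rightarrow> mat3 \<Rightarrow> real" where
  "fb mu lam y z F = mu * phi1 y (Nf F) + lam / 2 * phi2 z (Tf F)"
definition gb :: "real \<Rightarrow> real \<Rightarrow> real \<Rightarrow> real \<Rightarrow> mat3 \<Rightarrow> mat3" where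
  "gb mu lam y z F = mu *\<^sub>R (phi1d y (Nf F) *\<^sub>R gN F) + (lam / 2) *\<^sub>R (phi2d z (Tf F) *\<^sub>R F)"
definition Hx :: "real \<Rightarrow> real \<Rightarrow> real \<Rightarrow> real \<Rightarrow> mat3 \<Rightarrow> mat3 \<Rightarrow> mat3" where
  "Hx mu lam y z F K = mu *\<^sub>R ((phi1dd y (Nf F) * (gN F \<bullet> K)) *\<^sub>R gN F + phi1d y (Nf F) *\<^sub>R HN F K)
     + (lam / 2) *\<^sub>R ((phi2dd z (Tf F) * (F \<bullet> K)) *\<^sub>R F + phi2d z (Tf F) *\<^sub>R K)"

lemma fb_grad:
  assumes y: "y > 0" and z: "z > 0"
  shows "(fb mu lam y z has_derivative (\<lambda>K. gb mu lam y z F \<bullet> K)) (at F)"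
proof -
  have d1: "((\<lambda>F. phi1 y (Nf F)) has_derivative (\<lambda>K. (gN F \<bullet> K) * phi1d y (Nf F))) (at F)"
    by (rule DERIV_compose_FDERIV[OF phi1_deriv[OF y] Nf_deriv])
  have d2: "((\<lambda>F. phi2 z (Tf F)) has_derivative (\<lambda>K. (F \<bullet> K) * phi2d z (Tf F))) (at F)"
    by (rule DERIV_compose_FDERIV[OF phi2_deriv[OF z] Tf_deriv])
  have "(fb mu lam y z has_derivative (\<lambda>K. mu * ((gN F \<bullet> K) * phi1d y (Nf F)) + lam / 2 * ((F \<bullet> K) * phi2d z (Tf F)))) (at F)"
    unfolding fb_def[abs_def] by (intro has_derivative_add has_derivative_mult_right d1 d2)
  moreover have "(\<lambda>K. mu * ((gN F \<bullet> K) * phi1d y (Nf F)) + lam / 2 * ((F \<bullet> K) * phi2d z (Tf F))) = (\<lambda>K. gb mu lam y z F \<bullet> K)"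
    by (rule ext) (simp add: gb_def inner_add_left algebra_simps)
  ultimately show ?thesis by simp
qed

lemma gb_deriv:
  assumes y: "y > 0" and z: "z > 0"
  shows "(gb mu lam y z has_derivative Hx mu lam y z F) (at F)"
proof -
  have d1: "((\<lambda>F. phi1d y (Nf F)) has_derivative (\<lambda>K. (gN F \<bullet> K) * phi1dd y (Nf F))) (at F)"
    by (rule DERIV_compose_FDERIV[OF phi1d_deriv[OF y] Nf_deriv])
  have d2: "((\<lambda>F. phi2d z (Tf F)) has_derivative (\<lambda>K. (F \<bullet> K) * phi2dd z (Tf F))) (at F)"
    by (rule DERIV_compose_FDERIV[OF phi2d_deriv[OF z] Tf_deriv])
  have e1: "((\<lambda>F. phi1d y (Nf F) *\<^sub>R gN F) has_derivative (\<lambda>K. phi1d y (Nf F) *\<^sub>R HN F K + ((gN F \<bullet> K) * phi1dd y (Nf F)) *\<^sub>R gN F)) (at F)"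
    by (rule has_derivative_scaleR[OF d1 gN_deriv])
  have e2: "((\<lambda>F. phi2d z (Tf F) *\<^sub>R F) has_derivative (\<lambda>K. phi2d z (Tf F) *\<^sub>R K + ((F \<bullet> K) * phi2dd z (Tf F)) *\<^sub>R F)) (at F)"
    by (rule has_derivative_scaleR[OF d2 has_derivative_ident])
  have "(gb mu lam y z has_derivative (\<lambda>K. mu *\<^sub>R (phi1d y (Nf F) *\<^sub>R HN F K + ((gN F \<bullet> K) * phi1dd y (Nf F)) *\<^sub>R gN F)
      + (lam / 2) *\<^sub>R (phi2d z (Tf F) *\<^sub>R K + ((F \<bullet> K) * phi2dd z (Tf F)) *\<^sub>R F))) (at F)"
    unfolding gb_def[abs_def] by (intro has_derivative_add has_derivative_scaleR_right e1 e2)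
  moreover have "(\<lambda>K. mu *\<^sub>R (phi1d y (Nf F) *\<^sub>R HN F K + ((gN F \<bullet> K) * phi1dd y (Nf F)) *\<^sub>R gN F)
      + (lam / 2) *\<^sub>R (phi2d z (Tf F) *\<^sub>R K + ((F \<bullet> K) * phi2dd z (Tf F)) *\<^sub>R F)) = Hx mu lam y z F"
    by (rule ext) (simp add: Hx_def algebra_simps)
  ultimately show ?thesis by simp
qed

lemma Hx_bound:
  assumes y: "y > 0" and z: "z > 0" and mu: "mu > 0" and lam: "lam > 0"
  shows "norm (Hx mu lam y z F K) \<le> (mu * (180 * y + 138) + lam / 2 * (8 * z + 6)) * norm K"
proof -
  define w where "w = (norm F)^2"
  have w0: "0 \<le> w" unfolding w_def by simp
  have wN: "w \<le> 4 * sqrt (Nf F) + 3" unfolding w_def normF_sq using Tf_le[of F] by linarith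
  have wT: "w = 2 * Tf F + 3" unfolding w_def normF_sq ..
  have b1: "\<bar>phi1dd y (Nf F)\<bar> * (w * (4 * Nf F)) + \<bar>phi1d y (Nf F)\<bar> * (3 * w + 1) \<le> 180 * y + 138"
    by (rule phi1_bound[OF y Nf_nonneg w0 wN])
  have b2: "\<bar>phi2dd z (Tf F)\<bar> * (2 * Tf F + 3) + \<bar>phi2d z (Tf F)\<bar> \<le> 8 * z + 6"
    by (rule phi2_bound[OF z Tf_ge])
  have n1: "norm ((phi1dd y (Nf F) * (gN F \<bullet> K)) *\<^sub>R gN F + phi1d y (Nf F) *\<^sub>R HN F K)
      \<le> (\<bar>phi1dd y (Nf F)\<bar> * (w * (4 * Nf F)) + \<bar>phi1d y (Nf F)\<bar> * (3 * w + 1)) * norm K"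
  proof -
    have "norm ((phi1dd y (Nf F) * (gN F \<bullet> K)) *\<^sub>R gN F) \<le> \<bar>phi1dd y (Nf F)\<bar> * ((norm (gN F))^2 * norm K)"
    proof -
      have "norm ((phi1dd y (Nf F) * (gN F \<bullet> K)) *\<^sub>R gN F) = \<bar>phi1dd y (Nf F)\<bar> * (\<bar>gN F \<bullet> K\<bar> * norm (gN F))"
        by (simp add: abs_mult)
      also have "\<dots> \<le> \<bar>phi1dd y (Nf F)\<bar> * ((norm (gN F) * norm K) * norm (gN F))"
        by (intro mult_left_mono mult_right_mono Cauchy_Schwarz_ineq2) auto
      finally show ?thesis by (simp add: power2_eq_square mult_ac)
    qed
    also have "\<dots> \<le> \<bar>phi1dd y (Nf F)\<bar> * ((w * (4 * Nf F)) * norm K)"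
      using gN_norm_sq[of F] unfolding w_def by (intro mult_left_mono mult_right_mono) auto
    finally have t1: "norm ((phi1dd y (Nf F) * (gN F \<bullet> K)) *\<^sub>R gN F) \<le> \<bar>phi1dd y (Nf F)\<bar> * (w * (4 * Nf F)) * norm K"
      by (simp add: mult_ac)
    have t2: "norm (phi1d y (Nf F) *\<^sub>R HN F K) \<le> \<bar>phi1d y (Nf F)\<bar> * (3 * w + 1) * norm K"
      using HN_norm[of F K] unfolding w_def by (simp add: mult.assoc mult_left_mono)
    show ?thesis using norm_triangle_le[OF add_mono[OF t1 t2]] by (simp add: algebra_simps)
  qed
  have n2: "norm ((phi2dd z (Tf F) * (F \<bullet> K)) *\<^sub>R F + phi2d z (Tf F) *\<^sub>R K)
      \<le> (\<bar>phi2dd z (Tf F)\<bar> * (2 * Tf F + 3) + \<bar>phi2d z (Tf F)\<bar>) * norm K"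
  proof -
    have "norm ((phi2dd z (Tf F) * (F \<bullet> K)) *\<^sub>R F) = \<bar>phi2dd z (Tf F)\<bar> * (\<bar>F \<bullet> K\<bar> * norm F)"
      by (simp add: abs_mult)
    also have "\<dots> \<le> \<bar>phi2dd z (Tf F)\<bar> * ((norm F * norm K) * norm F)"
      by (intro mult_left_mono mult_right_mono Cauchy_Schwarz_ineq2) auto
    also have "\<dots> = \<bar>phi2dd z (Tf F)\<bar> * (2 * Tf F + 3) * norm K"
      using wT unfolding w_def by (simp add: power2_eq_square mult_ac)
    finally have t1: "norm ((phi2dd z (Tf F) * (F \<bullet> K)) *\<^sub>R F) \<le> \<bar>phi2dd z (Tf F)\<bar> * (2 * Tf F + 3) * norm K" .
    have t2: "norm (phi2d z (Tf F) *\<^sub>R K) = \<bar>phi2d z (Tf F)\<bar> * norm K" by simp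
    show ?thesis using norm_triangle_le[OF add_mono[OF t1 eq_refl[OF t2]]] by (simp add: algebra_simps)
  qed
  have "norm (Hx mu lam y z F K) \<le> mu * ((180 * y + 138) * norm K) + lam / 2 * ((8 * z + 6) * norm K)"
  proof -
    have "norm (Hx mu lam y z F K) \<le> mu * norm ((phi1dd y (Nf F) * (gN F \<bullet> K)) *\<^sub>R gN F + phi1d y (Nf F) *\<^sub>R HN F K)
       + lam / 2 * norm ((phi2dd z (Tf F) * (F \<bullet> K)) *\<^sub>R F + phi2d z (Tf F) *\<^sub>R K)"
      unfolding Hx_def using mu lam by (intro order_trans[OF norm_triangle_ineq]) simp
    also have "\<dots> \<le> mu * ((180 * y + 138) * norm K) + lam / 2 * ((8 * z + 6) * norm K)"
      using order_trans[OF n1 mult_right_mono[OF b1]] order_trans[OF n2 mult_right_mono[OF b2]] mu lam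
      by (intro add_mono mult_left_mono) auto
    finally show ?thesis .
  qed
  then show ?thesis by (simp add: algebra_simps)
qed

lemma lipgrad_convex:
  fixes f :: "'a::real_inner \<Rightarrow> real"
  assumes df: "\<And>x. (f has_derivative (\<lambda>h. g x \<bullet> h)) (at x)" and lg: "L-lipschitz_on UNIV g"
  shows "convex_on UNIV (\<lambda>x. f x + L / 2 * (norm x)^2)"
proof (rule convex_onI)
  show "convex (UNIV :: 'a set)" by simp
  fix t :: real and x y :: 'a assume t: "0 < t" "t < 1" and "x \<in> UNIV" "y \<in> UNIV"
  define d where "d = y - x"
  define p where "p s = x + s *\<^sub>R d" for s :: real
  define k where "k s = f (p s) + L / 2 * (norm (p s))^2" for s
  define kd where "kd s = (g (p s) + L *\<^sub>R p s) \<bullet> d" for s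
  have dp: "(p has_derivative (\<lambda>h. h *\<^sub>R d)) (at s)" for s
    unfolding p_def[abs_def] by (auto intro!: derivative_eq_intros)
  have dk: "(k has_real_derivative kd s) (at s)" for s
  proof -
    have a: "((\<lambda>s. f (p s)) has_derivative (\<lambda>h. g (p s) \<bullet> (h *\<^sub>R d))) (at s)"
      using has_derivative_compose[OF dp df] by simp
    have b: "((\<lambda>s. p s \<bullet> p s) has_derivative (\<lambda>h. p s \<bullet> (h *\<^sub>R d) + (h *\<^sub>R d) \<bullet> p s)) (at s)"
      by (rule has_derivative_inner[OF dp dp])
    have c: "(k has_derivative (\<lambda>h. g (p s) \<bullet> (h *\<^sub>R d) + L / 2 * (p s \<bullet> (h *\<^sub>R d) + (h *\<^sub>R d) \<bullet> p s))) (at s)"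
      unfolding k_def[abs_def] power2_norm_eq_inner by (intro has_derivative_add has_derivative_mult_right a b)
    have "(\<lambda>h. g (p s) \<bullet> (h *\<^sub>R d) + L / 2 * (p s \<bullet> (h *\<^sub>R d) + (h *\<^sub>R d) \<bullet> p s)) = (*) (kd s)"
      by (rule ext) (simp add: kd_def inner_add_left inner_commute algebra_simps)
    then show ?thesis using c by (simp add: has_field_derivative_def)
  qed
  have mono: "kd s1 \<le> kd s2" if "s1 \<le> s2" for s1 s2
  proof -
    have pd: "p s2 - p s1 = (s2 - s1) *\<^sub>R d" by (simp add: p_def algebra_simps)
    have "kd s2 - kd s1 = (g (p s2) - g (p s1)) \<bullet> d + L * ((p s2 - p s1) \<bullet> d)"
      unfolding kd_def by (simp add: inner_diff_left inner_add_left algebra_simps)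
    also have "\<dots> = (g (p s2) - g (p s1)) \<bullet> d + L * (s2 - s1) * (d \<bullet> d)" unfolding pd by simp
    moreover have "\<bar>(g (p s2) - g (p s1)) \<bullet> d\<bar> \<le> L * (s2 - s1) * (d \<bullet> d)"
    proof -
      have "\<bar>(g (p s2) - g (p s1)) \<bullet> d\<bar> \<le> norm (g (p s2) - g (p s1)) * norm d" by (rule Cauchy_Schwarz_ineq2)
      also have "\<dots> \<le> (L * norm (p s2 - p s1)) * norm d"
        using lipschitz_onD[OF lg, of "p s2" "p s1"] by (intro mult_right_mono) (auto simp: dist_norm)
      also have "\<dots> = L * (s2 - s1) * (d \<bullet> d)" unfolding pd using that
        by (simp add: power2_norm_eq_inner[symmetric] power2_eq_square)
      finally show ?thesis .
    qed
    ultimately show ?thesis by linarith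
  qed
  have cvx: "convex_on UNIV k" by (rule convex_on_realI[OF _ dk mono]) auto
  have "k ((1 - t) * 0 + t * 1) \<le> (1 - t) * k 0 + t * k 1"
    using convex_onD[OF cvx, of t 0 1] t by simp
  moreover have "p t = (1 - t) *\<^sub>R x + t *\<^sub>R y" by (simp add: p_def d_def algebra_simps)
  moreover have "p 0 = x" "p 1 = y" by (simp_all add: p_def d_def)
  ultimately show "f ((1 - t) *\<^sub>R x + t *\<^sub>R y) + L / 2 * (norm ((1 - t) *\<^sub>R x + t *\<^sub>R y))^2
      \<le> (1 - t) * (f x + L / 2 * (norm x)^2) + t * (f y + L / 2 * (norm y)^2)"
    by (simp add: k_def)
qed

lemma bb_blinfun:
  fixes T :: "'a::real_normed_vector \<Rightarrow> 'b::real_normed_vector \<Rightarrow> 'c::real_normed_vector \<Rightarrow> 'd::real_normed_vector"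
  assumes bl: "\<And>a b. bounded_linear (T a b)"
    and al: "\<And>a a' b K. T (a + a') b K = T a b K + T a' b K"
    and ar: "\<And>a b b' K. T a (b + b') K = T a b K + T a b' K"
    and sl: "\<And>r a b K. T (r *\<^sub>R a) b K = r *\<^sub>R T a b K"
    and sr: "\<And>r a b K. T a (r *\<^sub>R b) K = r *\<^sub>R T a b K"
    and nb: "\<And>a b K. norm (T a b K) \<le> norm a * norm b * norm K"
  shows "bounded_bilinear (\<lambda>a b. Blinfun (T a b))"
proof (rule bounded_bilinear.intro)
  show "Blinfun (T (a + a') b) = Blinfun (T a b) + Blinfun (T a' b)" for a a' b
    by (rule blinfun_eqI) (simp add: bounded_linear_Blinfun_apply bl al blinfun.add_left)
  show "Blinfun (T a (b + b')) = Blinfun (T a b) + Blinfun (T a b')" for a b b'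
    by (rule blinfun_eqI) (simp add: bounded_linear_Blinfun_apply bl ar blinfun.add_left)
  show "Blinfun (T (r *\<^sub>R a) b) = r *\<^sub>R Blinfun (T a b)" for r a b
    by (rule blinfun_eqI) (simp add: bounded_linear_Blinfun_apply bl sl blinfun.scaleR_left)
  show "Blinfun (T a (r *\<^sub>R b)) = r *\<^sub>R Blinfun (T a b)" for r a b
    by (rule blinfun_eqI) (simp add: bounded_linear_Blinfun_apply bl sr blinfun.scaleR_left)
  show "\<exists>K. \<forall>a b. norm (Blinfun (T a b)) \<le> norm a * norm b * K"
  proof (intro exI allI)
    fix a b
    show "norm (Blinfun (T a b)) \<le> norm a * norm b * 1"
      by (rule norm_blinfun_bound) (simp_all add: bounded_linear_Blinfun_apply bl nb)
  qed
qed

definition outer2 :: "mat3 \<Rightarrow> mat3 \<Rightarrow> mat3 \<Rightarrow>\<^sub>L mat3" where "outer2 a b = Blinfun (\<lambda>K. (a \<bullet> K) *\<^sub>R b)"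
definition RB2 :: "mat3 \<Rightarrow> mat3 \<Rightarrow> mat3 \<Rightarrow>\<^sub>L mat3" where "RB2 A B = Blinfun (\<lambda>K. K ** (transpose A ** B))"
definition MB :: "mat3 \<Rightarrow> mat3 \<Rightarrow> mat3 \<Rightarrow>\<^sub>L mat3" where "MB A B = Blinfun (\<lambda>K. A ** (transpose K ** B))"
definition LB2 :: "mat3 \<Rightarrow> mat3 \<Rightarrow> mat3 \<Rightarrow>\<^sub>L mat3" where "LB2 A B = Blinfun (\<lambda>K. A ** (transpose B ** K))"

lemma bl_outer: "bounded_linear (\<lambda>K::mat3. (a \<bullet> K) *\<^sub>R b)"
  by (intro bounded_linear_scaleR_left bounded_linear_inner_right bounded_linear_compose[of "\<lambda>r. r *\<^sub>R b"])
lemma bl_RB: "bounded_linear (\<lambda>K::mat3. K ** (M::mat3))"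
  by (rule bounded_bilinear.bounded_linear_left[OF bb_matrix_mult])
lemma bl_MB: "bounded_linear (\<lambda>K::mat3. (A::mat3) ** (transpose K ** (B::mat3)))"
proof -
  have a: "bounded_linear (\<lambda>X::mat3. X ** (B::mat3))"
    by (rule bounded_bilinear.bounded_linear_left[OF bb_matrix_mult])
  have c: "bounded_linear (\<lambda>K::mat3. transpose K ** (B::mat3))"
    using bounded_linear_compose[OF a bl_transpose] by simp
  have b: "bounded_linear (\<lambda>X::mat3. (A::mat3) ** X)"
    by (rule bounded_bilinear.bounded_linear_right[OF bb_matrix_mult])
  show ?thesis using bounded_linear_compose[OF b c] by simp
qed
lemma bl_LB: "bounded_linear (\<lambda>K::mat3. (A::mat3) ** (transpose (B::mat3) ** K))"
proof -
  have a: "bounded_linear (\<lambda>K::mat3. transpose (B::mat3) ** K)"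
    by (rule bounded_bilinear.bounded_linear_right[OF bb_matrix_mult])
  have b: "bounded_linear (\<lambda>X::mat3. (A::mat3) ** X)"
    by (rule bounded_bilinear.bounded_linear_right[OF bb_matrix_mult])
  show ?thesis using bounded_linear_compose[OF b a] by simp
qed

lemma nm3: "norm ((A::mat3) ** (B ** C)) \<le> norm A * norm B * norm C"
  by (rule order_trans[OF norm_mat_mult]) (simp add: mult.assoc mult_left_mono norm_mat_mult)

lemma bb_outer2: "bounded_bilinear outer2"
proof -
  have "bounded_bilinear (\<lambda>a b. Blinfun (\<lambda>K::mat3. (a \<bullet> K) *\<^sub>R (b::mat3)))"
  proof (rule bb_blinfun)
    show "bounded_linear (\<lambda>K::mat3. (a \<bullet> K) *\<^sub>R b)" for a b :: mat3 by (rule bl_outer)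
    show "norm ((a \<bullet> K) *\<^sub>R b) \<le> norm a * norm b * norm K" for a b K :: mat3
    proof -
      have "norm b * \<bar>a \<bullet> K\<bar> \<le> norm b * (norm a * norm K)" by (rule mult_left_mono[OF Cauchy_Schwarz_ineq2]) simp
      then show ?thesis by (simp add: mult_ac)
    qed
  qed (simp_all add: inner_add_left algebra_simps)
  then show ?thesis unfolding outer2_def[abs_def] .
qed

lemma bb_RB2: "bounded_bilinear RB2"
proof -
  have "bounded_bilinear (\<lambda>A B. Blinfun (\<lambda>K::mat3. K ** (transpose A ** (B::mat3))))"
  proof (rule bb_blinfun)
    show "bounded_linear (\<lambda>K::mat3. K ** (transpose A ** B))" for A B :: mat3 by (rule bl_RB)
    show "norm (K ** (transpose A ** B)) \<le> norm A * norm B * norm K" for A B K :: mat3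
      using nm3[of K "transpose A" B] by (simp add: norm_transpose mult_ac)
  qed (simp_all add: transpose_add' transpose_scalar matrix_add_rdistrib' matrix_add_ldistrib matrix_scaleR_left matrix_scaleR_right)
  then show ?thesis unfolding RB2_def[abs_def] .
qed

lemma bb_MB: "bounded_bilinear MB"
proof -
  have "bounded_bilinear (\<lambda>(A::mat3) B. Blinfun (\<lambda>K::mat3. A ** (transpose K ** (B::mat3))))"
  proof (rule bb_blinfun)
    show "bounded_linear (\<lambda>K::mat3. A ** (transpose K ** B))" for A B :: mat3 by (rule bl_MB)
    show "norm (A ** (transpose K ** B)) \<le> norm A * norm B * norm K" for A B K :: mat3
      using nm3[of A "transpose K" B] by (simp add: norm_transpose mult_ac)
  qed (simp_all add: matrix_add_rdistrib' matrix_add_ldistrib matrix_scaleR_left matrix_scaleR_right)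
  then show ?thesis unfolding MB_def[abs_def] .
qed

lemma bb_LB2: "bounded_bilinear LB2"
proof -
  have "bounded_bilinear (\<lambda>(A::mat3) B. Blinfun (\<lambda>K::mat3. A ** (transpose (B::mat3) ** K)))"
  proof (rule bb_blinfun)
    show "bounded_linear (\<lambda>K::mat3. A ** (transpose B ** K))" for A B :: mat3 by (rule bl_LB)
    show "norm (A ** (transpose B ** K)) \<le> norm A * norm B * norm K" for A B K :: mat3
      using nm3[of A "transpose B" K] by (simp add: norm_transpose mult_ac)
  qed (simp_all add: transpose_add' transpose_scalar matrix_add_rdistrib' matrix_add_ldistrib matrix_scaleR_left matrix_scaleR_right)
  then show ?thesis unfolding LB2_def[abs_def] .
qed

definition Hb :: "real \<Rightarrow> real \<Rightarrow> real \<Rightarrow> real \<Rightarrow> mat3 \<Rightarrow> mat3 \<Rightarrow>\<^sub>L mat3" where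
  "Hb mu lam y z F = Blinfun (Hx mu lam y z F)"

lemma Hb_apply: assumes "y > 0" "z > 0" shows "blinfun_apply (Hb mu lam y z F) = Hx mu lam y z F"
  unfolding Hb_def by (rule bounded_linear_Blinfun_apply[OF has_derivative_bounded_linear[OF gb_deriv[OF assms]]])

lemma HN_bl: "bounded_linear (HN F)"
  by (rule has_derivative_bounded_linear[OF gN_deriv])

lemma outer2_apply: "blinfun_apply (outer2 a b) K = (a \<bullet> K) *\<^sub>R b"
  unfolding outer2_def by (simp add: bounded_linear_Blinfun_apply[OF bl_outer])
lemma RB2_apply: "blinfun_apply (RB2 A B) K = K ** (transpose A ** B)"
  unfolding RB2_def by (simp add: bounded_linear_Blinfun_apply[OF bl_RB])
lemma MB_apply: "blinfun_apply (MB A B) K = A ** (transpose K ** B)"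
  unfolding MB_def by (simp add: bounded_linear_Blinfun_apply[OF bl_MB])
lemma LB2_apply: "blinfun_apply (LB2 A B) K = A ** (transpose B ** K)"
  unfolding LB2_def by (simp add: bounded_linear_Blinfun_apply[OF bl_LB])

lemma HN_B: "Blinfun (HN F) = RB2 F F - id_blinfun + MB F F + LB2 F F"
  by (rule blinfun_eqI)
    (simp add: bounded_linear_Blinfun_apply[OF HN_bl] HN_def RB2_apply MB_apply LB2_apply blinfun.add_left blinfun.diff_left)

lemma Hb_eq: assumes "y > 0" "z > 0"
  shows "Hb mu lam y z F = mu *\<^sub>R (phi1dd y (Nf F) *\<^sub>R outer2 (gN F) (gN F) + phi1d y (Nf F) *\<^sub>R (RB2 F F - id_blinfun + MB F F + LB2 F F))
     + (lam / 2) *\<^sub>R (phi2dd z (Tf F) *\<^sub>R outer2 F F + phi2d z (Tf F) *\<^sub>R id_blinfun)"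
  unfolding HN_B[symmetric]
  by (rule blinfun_eqI)
    (simp add: Hb_apply[OF assms] Hx_def bounded_linear_Blinfun_apply[OF HN_bl] outer2_apply blinfun.add_left blinfun.scaleR_left)

lemma LL_strainE: "bounded U \<Longrightarrow> LL U strainE"
proof -
  assume U: "bounded U"
  have a: "LL U (\<lambda>F::mat3. transpose F ** F)"
    by (rule LL_bilinear[OF bb_matrix_mult U LL_linear[OF bl_transpose LL_id] LL_id])
  have "LL U (\<lambda>F::mat3. (1/2) *\<^sub>R (transpose F ** F - mat 1))"
    by (rule LL_linear[OF bounded_linear_scaleR_right]) (rule LL_diff[OF a LL_const])
  then show ?thesis unfolding strainE_def[abs_def] .
qed

lemma LL_Nf: "bounded U \<Longrightarrow> LL U Nf"
  unfolding Nf_def[abs_def] by (rule LL_bilinear[OF bounded_bilinear_inner _ LL_strainE LL_strainE])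

lemma LL_Tf: "bounded U \<Longrightarrow> LL U Tf"
proof -
  assume U: "bounded U"
  have "LL U (\<lambda>F::mat3. (1/2) * (F \<bullet> F - 3))"
    by (intro LL_cmult LL_diff LL_const LL_bilinear[OF bounded_bilinear_inner U LL_id LL_id])
  moreover have "Tf = (\<lambda>F. (1/2) * (F \<bullet> F - 3))" by (rule ext) (simp add: Tf_eq)
  ultimately show ?thesis by simp
qed

lemma LL_gN: "bounded U \<Longrightarrow> LL U gN"
proof -
  assume U: "bounded U"
  have a: "LL U (\<lambda>F::mat3. transpose F ** F - mat 1)"
    by (rule LL_diff[OF LL_bilinear[OF bb_matrix_mult U LL_linear[OF bl_transpose LL_id] LL_id] LL_const])
  show ?thesis unfolding gN_def[abs_def] by (rule LL_bilinear[OF bb_matrix_mult U LL_id a])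
qed

lemma LL_compose_real:
  fixes h :: "mat3 \<Rightarrow> real"
  assumes U: "bounded U" and h: "LL U h" and p: "\<And>S. bounded S \<Longrightarrow> LL S p"
  shows "LL U (\<lambda>F. p (h F))"
  by (rule LL_compose[OF h p[OF LL_bounded[OF h U]] order_refl])

lemma Hb_LL:
  assumes y: "y > 0" and z: "z > 0" and U: "bounded U"
  shows "LL U (Hb mu lam y z)"
proof -
  have p1: "LL U (\<lambda>F. phi1dd y (Nf F))" "LL U (\<lambda>F. phi1d y (Nf F))"
    using LL_compose_real[OF U LL_Nf[OF U]] phi1_LL[OF y] by blast+
  have p2: "LL U (\<lambda>F. phi2dd z (Tf F))" "LL U (\<lambda>F. phi2d z (Tf F))"
    using LL_compose_real[OF U LL_Tf[OF U]] phi2_LL[OF z] by blast+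
  have o1: "LL U (\<lambda>F. outer2 (gN F) (gN F))" by (rule LL_bilinear[OF bb_outer2 U LL_gN[OF U] LL_gN[OF U]])
  have o2: "LL U (\<lambda>F. outer2 F F)" by (rule LL_bilinear[OF bb_outer2 U LL_id LL_id])
  have hn: "LL U (\<lambda>F. RB2 F F - id_blinfun + MB F F + LB2 F F)"
    by (intro LL_add LL_diff LL_const LL_bilinear[OF bb_RB2 U LL_id LL_id] LL_bilinear[OF bb_MB U LL_id LL_id] LL_bilinear[OF bb_LB2 U LL_id LL_id])
  have "LL U (\<lambda>F. mu *\<^sub>R (phi1dd y (Nf F) *\<^sub>R outer2 (gN F) (gN F) + phi1d y (Nf F) *\<^sub>R (RB2 F F - id_blinfun + MB F F + LB2 F F))
     + (lam / 2) *\<^sub>R (phi2dd z (Tf F) *\<^sub>R outer2 F F + phi2d z (Tf F) *\<^sub>R id_blinfun))"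
    by (intro LL_add LL_linear[OF bounded_linear_scaleR_right] LL_scaleR[OF U] p1 p2 o1 o2 hn LL_const)
  moreover have "Hb mu lam y z = (\<lambda>F. mu *\<^sub>R (phi1dd y (Nf F) *\<^sub>R outer2 (gN F) (gN F) + phi1d y (Nf F) *\<^sub>R (RB2 F F - id_blinfun + MB F F + LB2 F F))
     + (lam / 2) *\<^sub>R (phi2dd z (Tf F) *\<^sub>R outer2 F F + phi2d z (Tf F) *\<^sub>R id_blinfun))"
    by (rule ext) (rule Hb_eq[OF y z])
  ultimately show ?thesis by simp
qed

lemma Hb_loclip:
  assumes y: "y > 0" and z: "z > 0"
  shows "\<exists>U C. open U \<and> x \<in> U \<and> C-lipschitz_on U (Hb mu lam y z)"
proof -
  have "LL (ball x 1) (Hb mu lam y z)" by (rule Hb_LL[OF y z bounded_ball])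
  then obtain C where "C-lipschitz_on (ball x 1) (Hb mu lam y z)" unfolding LL_def by blast
  then show ?thesis by (intro exI[of _ "ball x 1"] exI[of _ C]) auto
qed

lemma pStVK_phi1:
  assumes y: "y > 0" and x: "x \<ge> 0" shows "pStVK x y = phi1 y (x^2)"
proof (cases "x > y")
  case True
  then have "\<not> x^2 \<le> y^2" using y by (simp add: power_mono_iff not_le)
  moreover have "6 * (2 * y / 3 - x)^2 + y^2 / 3 = hS y (x^2)"
    using x by (simp add: hS_def power2_eq_square algebra_simps)
  ultimately show ?thesis using True by (simp add: pStVK_def phi1_def G0_def)
next
  case False
  then have "x^2 \<le> y^2" using x by (simp add: power_mono)
  then show ?thesis using False x y by (simp add: pStVK_def phi1_def)
qed

lemma pStVK_phi2:
  assumes z: "z > 0" shows "pStVK t z = phi2 z t"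
proof -
  have m: "M0 z (-z) = z^2" using PM_at[OF z] by simp
  show ?thesis
    unfolding pStVK_def phi2_def P0_def M0_def gp_def gm_def
    using z m by (auto simp: M0_def gm_def)
qed

lemma pbar_fb:
  assumes mu: "mu > 0" and lam: "lam > 0" and L2: "L2 > 0"
  shows "pbar mu lam L2 = fb mu lam (sqrt (L2 / mu)) (sqrt (2 * L2 / lam))"
proof (rule ext)
  fix F
  have y: "sqrt (L2 / mu) > 0" and z: "sqrt (2 * L2 / lam) > 0" using mu lam L2 by auto
  show "pbar mu lam L2 F = fb mu lam (sqrt (L2 / mu)) (sqrt (2 * L2 / lam)) F"
    unfolding pbar_def fb_def pStVK_phi1[OF y norm_ge_zero] pStVK_phi2[OF z] Nf_norm Tf_def ..
qed

lemma pStVK_nonneg: "y > 0 \<Longrightarrow> pStVK x y \<ge> 0"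
  by (simp add: pStVK_def)

lemma sqrt_gt_aux: assumes y: "y > 0" and g: "y^2 < g" shows "y^2 < y * sqrt g"
proof -
  have "y < sqrt g" using g y by (metis abs_of_pos real_sqrt_abs real_sqrt_less_mono)
  then have "y * y < y * sqrt g" using y by simp
  then show ?thesis by (simp add: power2_eq_square)
qed

lemma pStVK_big:
  assumes y: "y > 0" and x: "x > y \<or> x < -y" shows "pStVK x y > y^2"
proof (cases "x > y")
  case True
  have "y / 3 < x - 2 * y / 3" using True by simp
  then have "(y / 3)^2 < (x - 2 * y / 3)^2" using y by (intro power_strict_mono) auto
  then have "(y / 3)^2 < (2 * y / 3 - x)^2" by (simp only: power2_commute)
  then have "y^2 < 6 * (2 * y / 3 - x)^2 + y^2 / 3" by (simp add: power_divide)
  then show ?thesis using True sqrt_gt_aux[OF y] by (simp add: pStVK_def)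
next
  case False
  then have xx: "x < -y" using x by simp
  then have "y / 3 < - (2 * y / 3 + x)" by simp
  then have "(y / 3)^2 < (- (2 * y / 3 + x))^2" using y by (intro power_strict_mono) auto
  then have "(y / 3)^2 < (2 * y / 3 + x)^2" by (simp only: power2_minus)
  then have "y^2 < 6 * (2 * y / 3 + x)^2 + y^2 / 3" by (simp add: power_divide)
  then show ?thesis using False xx sqrt_gt_aux[OF y] by (simp add: pStVK_def)
qed

lemma pStVK_small: "\<not> x > y \<Longrightarrow> \<not> x < -y \<Longrightarrow> pStVK x y = x^2"
  by (simp add: pStVK_def)

lemma part_iv:
  assumes mu: "mu > 0" and lam: "lam > 0" and L2: "L2 > 0" and le: "pbar mu lam L2 F \<le> L2"
  shows "pbar mu lam L2 F = stvk_energy mu lam F"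
proof -
  define y where "y = sqrt (L2 / mu)"
  define z where "z = sqrt (2 * L2 / lam)"
  have y0: "y > 0" and z0: "z > 0" using mu lam L2 by (auto simp: y_def z_def)
  have yy: "mu * y^2 = L2" using mu L2 by (simp add: y_def)
  have zz: "lam / 2 * z^2 = L2" using lam L2 by (simp add: z_def)
  define a where "a = pStVK (norm (strainE F)) y"
  define b where "b = pStVK (trace (strainE F)) z"
  have p: "pbar mu lam L2 F = mu * a + lam / 2 * b" by (simp add: pbar_def a_def b_def y_def z_def)
  have a0: "a \<ge> 0" unfolding a_def by (rule pStVK_nonneg[OF y0])
  have b0: "b \<ge> 0" unfolding b_def by (rule pStVK_nonneg[OF z0])
  have ma: "mu * a \<le> L2" using le p b0 lam by (smt (verit) divide_pos_pos mult_nonneg_nonneg)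
  have lb: "lam / 2 * b \<le> L2" using le p a0 mu by (smt (verit) mult_nonneg_nonneg)
  have "\<not> (norm (strainE F) > y \<or> norm (strainE F) < -y)"
  proof
    assume "norm (strainE F) > y \<or> norm (strainE F) < -y"
    then have "a > y^2" unfolding a_def by (rule pStVK_big[OF y0])
    then have "mu * a > mu * y^2" using mu by simp
    then show False using ma yy by simp
  qed
  then have ae: "a = (norm (strainE F))^2" unfolding a_def using pStVK_small by blast
  have "\<not> (trace (strainE F) > z \<or> trace (strainE F) < -z)"
  proof
    assume "trace (strainE F) > z \<or> trace (strainE F) < -z"
    then have "b > z^2" unfolding b_def by (rule pStVK_big[OF z0])
    then have "lam / 2 * b > lam / 2 * z^2" using lam by simp
    then show False using lb zz by simp
  qed
  then have be: "b = (trace (strainE F))^2" unfolding b_def using pStVK_small by blast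
  show ?thesis unfolding p ae be stvk_energy_def ..
qed

lemma sqrt_le_1_plus: "x \<ge> 0 \<Longrightarrow> sqrt x \<le> 1 + x"
proof -
  assume x: "x \<ge> 0"
  have "sqrt x \<le> sqrt ((1 + x)^2)" by (rule real_sqrt_le_mono) (use x in \<open>simp add: power2_eq_square algebra_simps\<close>)
  then show ?thesis using x by simp
qed

lemma main_facts:
  assumes mu: "mu > 0" and lam: "lam > 0" and L2: "L2 > 0"
  defines "y \<equiv> sqrt (L2 / mu)" and "z \<equiv> sqrt (2 * L2 / lam)"
  shows "has_gradient_everywhere (pbar mu lam L2) (gb mu lam y z)"
    and "\<forall>x. (gb mu lam y z has_derivative blinfun_apply (Hb mu lam y z x)) (at x)"
    and "\<forall>x. \<exists>U C. open U \<and> x \<in> U \<and> C-lipschitz_on U (Hb mu lam y z)"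
    and "(318 * mu + 7 * lam + 188 * L2)-lipschitz_on UNIV (gb mu lam y z)"
proof -
  have y: "y > 0" and z: "z > 0" using mu lam L2 by (auto simp: y_def z_def)
  have pf: "pbar mu lam L2 = fb mu lam y z" unfolding y_def z_def by (rule pbar_fb[OF mu lam L2])
  show "has_gradient_everywhere (pbar mu lam L2) (gb mu lam y z)"
    unfolding has_gradient_everywhere_def pf using fb_grad[OF y z] by blast
  show "\<forall>x. (gb mu lam y z has_derivative blinfun_apply (Hb mu lam y z x)) (at x)"
    unfolding Hb_apply[OF y z] using gb_deriv[OF y z] by blast
  show "\<forall>x. \<exists>U C. open U \<and> x \<in> U \<and> C-lipschitz_on U (Hb mu lam y z)"
    using Hb_loclip[OF y z] by blast
  define B where "B = mu * (180 * y + 138) + lam / 2 * (8 * z + 6)"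
  have B0: "B \<ge> 0" unfolding B_def using mu lam y z by simp
  have "B-lipschitz_on UNIV (gb mu lam y z)"
  proof (rule bounded_derivative_imp_lipschitz[OF _ convex_UNIV _ B0])
    show "(gb mu lam y z has_derivative Hx mu lam y z x) (at x within UNIV)" for x
      using gb_deriv[OF y z] by simp
    show "onorm (Hx mu lam y z x) \<le> B" for x
      by (rule onorm_le) (unfold B_def, rule Hx_bound[OF y z mu lam])
  qed
  moreover have "B \<le> 318 * mu + 7 * lam + 188 * L2"
  proof -
    have "y \<le> 1 + L2 / mu" unfolding y_def by (rule sqrt_le_1_plus) (use mu L2 in simp)
    then have a: "mu * y \<le> mu + L2" using mu by (simp add: field_simps mult_left_mono[of y "1 + L2/mu" mu, simplified])
    have "z \<le> 1 + 2 * L2 / lam" unfolding z_def by (rule sqrt_le_1_plus) (use lam L2 in simp)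
    then have b: "lam * z \<le> lam + 2 * L2" using lam by (simp add: field_simps mult_left_mono[of z "1 + 2 * L2/lam" lam, simplified])
    show ?thesis unfolding B_def using a b by (simp add: algebra_simps)
  qed
  ultimately show "(318 * mu + 7 * lam + 188 * L2)-lipschitz_on UNIV (gb mu lam y z)"
    using lipschitz_on_mono by blast
qed

theorem corollary6:
  fixes mu lam :: real
  assumes "mu > 0" and "lam > 0"
  shows "(\<exists>q :: real poly. \<forall>L2 > 0. curvature_bounded (poly q L2) (pbar mu lam L2))
       \<and> (\<forall>L2 > 0. twice_differentiable (pbar mu lam L2))
       \<and> (\<forall>L2 > 0. twice_diff_loclip_hessian (pbar mu lam L2))
       \<and> (\<forall>F. stvk_energy mu lam F \<ge> 0)
       \<and> (\<forall>L2 > 0. \<forall>F. pbar mu lam L2 F \<le> L2 \<longrightarrow> pbar mu lam L2 F = stvk_energy mu lam F)"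
proof (intro conjI allI impI)
  note mf = main_facts[OF assms]
  show "\<exists>q :: real poly. \<forall>L2 > 0. curvature_bounded (poly q L2) (pbar mu lam L2)"
  proof (intro exI allI impI)
    fix L2 :: real assume L2: "L2 > 0"
    note m = mf[OF L2]
    have pq: "poly [:318 * mu + 7 * lam, 188:] L2 = 318 * mu + 7 * lam + 188 * L2" by (simp add: algebra_simps)
    show "curvature_bounded (poly [:318 * mu + 7 * lam, 188:] L2) (pbar mu lam L2)"
      unfolding curvature_bounded_def pq
    proof
      show "convex_on UNIV (\<lambda>x. pbar mu lam L2 x + (318 * mu + 7 * lam + 188 * L2) / 2 * (norm x)^2)"
        by (rule lipgrad_convex[OF _ m(4)]) (use m(1) in \<open>auto simp: has_gradient_everywhere_def\<close>)
      show "\<exists>g. has_gradient_everywhere (pbar mu lam L2) g \<and> (318 * mu + 7 * lam + 188 * L2)-lipschitz_on UNIV g"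
        using m(1) m(4) by blast
    qed
  qed
  show "twice_differentiable (pbar mu lam L2)" if "L2 > 0" for L2
    unfolding twice_differentiable_def using mf(1,2)[OF that] by blast
  show "twice_diff_loclip_hessian (pbar mu lam L2)" if "L2 > 0" for L2
    unfolding twice_diff_loclip_hessian_def using mf(1,2,3)[OF that] by blast
  show "stvk_energy mu lam F \<ge> 0" for F
    unfolding stvk_energy_def using assms by simp
  show "pbar mu lam L2 F = stvk_energy mu lam F" if "L2 > 0" "pbar mu lam L2 F \<le> L2" for L2 F
    by (rule part_iv[OF assms that])
qed


end
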